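(* In CC, if $\Gamma\vdash M:A$, then $\mathrm{FV}(M)\vdash M:A$.
   Context: CC: expressions $x\mid U_i\mid\Pi x{:}A.B\mid L\,M\mid\lambda x{:}A.M$; contexts $\Gamma::=\cdot\mid\Gamma,x{:}A$; reduction $(\lambda x{:}A.N)\,M\triangleright N[M/x]$; equivalence $\equiv$ is joinability under $\triangleright^*$ plus $\eta$ (if $L\triangleright^*\lambda x{:}A.L'$, $M\triangleright^*M'$, $L'\equiv M'\,x$ then $L\equiv M$, and symmetrically). Typing and context formation (mutual): $\vdash\cdot$; $\vdash\Gamma,\Gamma\vdash A:U_i\Rightarrow\vdash\Gamma,x{:}A$; variables from a well-formed context; $U_i:U_{i+1}$; $\Pi x{:}A.B:U_{\max(i,j)}$ if $A:U_i$ and $B:U_j$ under $x{:}A$; $M\,N:B[N/x]$ if $M:\Pi x{:}A.B$, $N:A$; $\lambda x{:}A.M:\Pi x{:}A.B$ if $M:B$ under $x{:}A$; conversion to a type $B:U_i$ with $A\equiv B$. $\mathrm{FV}(M)$ takes the derivation of $\Gamma\vdash M:A$ as implicit argument: let $x_1,\dots,x_n$ be the unbound (free) variables of $M$ and of $A$, with $\Gamma\vdash x_k:A_k$; then $\mathrm{FV}(M)=\mathrm{FV}(A_1)\cup\dots\cup\mathrm{FV}(A_n)\cup(x_1{:}A_1,\dots,x_n{:}A_n)$, where the union $\Gamma_1\cup\Gamma_2$ of contexts is $\Gamma_1$ appended with the entries $x{:}A$ that appear only in $\Gamma_2$, preserving their order. *)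

theory Defs
  imports Main
begin

text \<open>Calculus of Constructions with a universe hierarchy, in locally nameless style:
  bound variables are de Bruijn indices, free variables are names (so alpha-equivalent
  terms are syntactically equal), contexts are lists of named declarations.\<close>

type_synonym name = nat

datatype trm =
    BVar nat
  | FVar name
  | Univ nat
  | Pi trm trm        (* Pi x:A. B, body B binds index 0 *)
  | App trm trm
  | Lam trm trm       (* lambda x:A. M, body M binds index 0 *)

primrec open_rec :: "nat \<Rightarrow> trm \<Rightarrow> trm \<Rightarrow> trm" where
  "open_rec k u (BVar i) = (if i = k then u else BVar i)"
| "open_rec k u (FVar x) = FVar x"
| "open_rec k u (Univ i) = Univ i"
| "open_rec k u (Pi A B) = Pi (open_rec k u A) (open_rec (Suc k) u B)"
| "open_rec k u (App L M) = App (open_rec k u L) (open_rec k u M)"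
| "open_rec k u (Lam A M) = Lam (open_rec k u A) (open_rec (Suc k) u M)"

text \<open>\<open>opn N M\<close> is N[M/x] where x is the variable bound by the enclosing binder.\<close>
definition opn :: "trm \<Rightarrow> trm \<Rightarrow> trm" where
  "opn t u = open_rec 0 u t"

primrec fv :: "trm \<Rightarrow> name set" where
  "fv (BVar i) = {}"
| "fv (FVar x) = {x}"
| "fv (Univ i) = {}"
| "fv (Pi A B) = fv A \<union> fv B"
| "fv (App L M) = fv L \<union> fv M"
| "fv (Lam A M) = fv A \<union> fv M"

inductive red :: "trm \<Rightarrow> trm \<Rightarrow> bool" where
  beta: "red (App (Lam A N) M) (opn N M)"
| app1: "red L L' \<Longrightarrow> red (App L M) (App L' M)"
| app2: "red M M' \<Longrightarrow> red (App L M) (App L M')"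
| pi1: "red A A' \<Longrightarrow> red (Pi A B) (Pi A' B)"
| pi2: "finite S \<Longrightarrow> (\<And>x. x \<notin> S \<Longrightarrow> red (opn B (FVar x)) (opn B' (FVar x)))
        \<Longrightarrow> red (Pi A B) (Pi A B')"
| lam1: "red A A' \<Longrightarrow> red (Lam A M) (Lam A' M)"
| lam2: "finite S \<Longrightarrow> (\<And>x. x \<notin> S \<Longrightarrow> red (opn M (FVar x)) (opn M' (FVar x)))
        \<Longrightarrow> red (Lam A M) (Lam A M')"

abbreviation reds :: "trm \<Rightarrow> trm \<Rightarrow> bool" where
  "reds \<equiv> red\<^sup>*\<^sup>*"

inductive equiv :: "trm \<Rightarrow> trm \<Rightarrow> bool" where
  join: "reds L N \<Longrightarrow> reds M N \<Longrightarrow> equiv L M"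
| eta1: "reds L (Lam A L') \<Longrightarrow> reds M M' \<Longrightarrow> finite S \<Longrightarrow>
         (\<And>x. x \<notin> S \<Longrightarrow> equiv (opn L' (FVar x)) (App M' (FVar x))) \<Longrightarrow> equiv L M"
| eta2: "reds L L' \<Longrightarrow> reds M (Lam A M') \<Longrightarrow> finite S \<Longrightarrow>
         (\<And>x. x \<notin> S \<Longrightarrow> equiv (App L' (FVar x)) (opn M' (FVar x))) \<Longrightarrow> equiv L M"

text \<open>Contexts: the list \<open>\<Gamma> @ [(x, A)]\<close> is \<open>\<Gamma>, x:A\<close>.\<close>
type_synonym ctx = "(name \<times> trm) list"

definition cdom :: "ctx \<Rightarrow> name set" where
  "cdom \<Gamma> = fst ` set \<Gamma>"

inductive wf_ctx :: "ctx \<Rightarrow> bool"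
  and typing :: "ctx \<Rightarrow> trm \<Rightarrow> trm \<Rightarrow> bool" where
  wf_nil: "wf_ctx []"
| wf_cons: "wf_ctx \<Gamma> \<Longrightarrow> typing \<Gamma> A (Univ i) \<Longrightarrow> x \<notin> cdom \<Gamma> \<Longrightarrow> wf_ctx (\<Gamma> @ [(x, A)])"
| t_var: "wf_ctx \<Gamma> \<Longrightarrow> (x, A) \<in> set \<Gamma> \<Longrightarrow> typing \<Gamma> (FVar x) A"
| t_univ: "wf_ctx \<Gamma> \<Longrightarrow> typing \<Gamma> (Univ i) (Univ (Suc i))"
| t_pi: "typing \<Gamma> A (Univ i) \<Longrightarrow> finite S \<Longrightarrow>
         (\<And>x. x \<notin> S \<Longrightarrow> typing (\<Gamma> @ [(x, A)]) (opn B (FVar x)) (Univ j)) \<Longrightarrow>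
         typing \<Gamma> (Pi A B) (Univ (max i j))"
| t_app: "typing \<Gamma> M (Pi A B) \<Longrightarrow> typing \<Gamma> N A \<Longrightarrow> typing \<Gamma> (App M N) (opn B N)"
| t_lam: "finite S \<Longrightarrow>
         (\<And>x. x \<notin> S \<Longrightarrow> typing (\<Gamma> @ [(x, A)]) (opn M (FVar x)) (opn B (FVar x))) \<Longrightarrow>
         typing \<Gamma> (Lam A M) (Pi A B)"
| t_conv: "typing \<Gamma> M A \<Longrightarrow> typing \<Gamma> B (Univ i) \<Longrightarrow> equiv A B \<Longrightarrow> typing \<Gamma> M B"

definition cunion :: "ctx \<Rightarrow> ctx \<Rightarrow> ctx" where
  "cunion \<Gamma>1 \<Gamma>2 = \<Gamma>1 @ filter (\<lambda>e. e \<notin> set \<Gamma>1) \<Gamma>2"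

text \<open>\<open>fvc_aux n \<Gamma> S\<close>: the free-variable context generated by the variables \<open>S\<close> in \<open>\<Gamma>\<close>,
  i.e. \<open>FV(A_1) \<union> ... \<union> FV(A_n) \<union> (x_1:A_1,...,x_n:A_n)\<close> where \<open>x_1,...,x_n\<close> are the
  declared variables of \<open>\<Gamma>\<close> lying in \<open>S\<close>, listed in their order in \<open>\<Gamma>\<close>.
  The type \<open>A_k\<close> of \<open>x_k\<close> is typed (by a universe, which has no free variables) in the
  prefix of \<open>\<Gamma>\<close> preceding \<open>x_k\<close>, so the recursion is on that prefix.
  \<open>n\<close> is fuel; \<open>n = length \<Gamma>\<close> suffices.\<close>
primrec fvc_aux :: "nat \<Rightarrow> ctx \<Rightarrow> name set \<Rightarrow> ctx" where
  "fvc_aux 0 \<Gamma> S = []"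
| "fvc_aux (Suc n) \<Gamma> S =
     (let idx = filter (\<lambda>i. fst (\<Gamma> ! i) \<in> S) [0..<length \<Gamma>]
      in cunion (foldl cunion [] (map (\<lambda>i. fvc_aux n (take i \<Gamma>) (fv (snd (\<Gamma> ! i)))) idx))
                (map (\<lambda>i. \<Gamma> ! i) idx))"

definition fvc :: "ctx \<Rightarrow> name set \<Rightarrow> ctx" where
  "fvc \<Gamma> S = fvc_aux (length \<Gamma>) \<Gamma> S"

text \<open>\<open>FV(M)\<close> for a derivation of \<open>\<Gamma> \<turnstile> M : A\<close>: generated by the free variables of M and A.\<close>
definition FV :: "ctx \<Rightarrow> trm \<Rightarrow> trm \<Rightarrow> ctx" where
  "FV \<Gamma> M A = fvc \<Gamma> (fv M \<union> fv A)"

end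

theory Submission
  imports Defs
begin

primrec lc_at :: "nat \<Rightarrow> trm \<Rightarrow> bool" where
  "lc_at k (BVar i) = (i < k)"
| "lc_at k (FVar x) = True"
| "lc_at k (Univ i) = True"
| "lc_at k (Pi A B) = (lc_at k A \<and> lc_at (Suc k) B)"
| "lc_at k (App L M) = (lc_at k L \<and> lc_at k M)"
| "lc_at k (Lam A M) = (lc_at k A \<and> lc_at (Suc k) M)"

abbreviation lc :: "trm \<Rightarrow> bool" where "lc t \<equiv> lc_at 0 t"

primrec subst :: "name \<Rightarrow> trm \<Rightarrow> trm \<Rightarrow> trm" where
  "subst x u (BVar i) = BVar i"
| "subst x u (FVar y) = (if y = x then u else FVar y)"
| "subst x u (Univ i) = Univ i"
| "subst x u (Pi A B) = Pi (subst x u A) (subst x u B)"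
| "subst x u (App L M) = App (subst x u L) (subst x u M)"
| "subst x u (Lam A M) = Lam (subst x u A) (subst x u M)"

primrec close_rec :: "nat \<Rightarrow> name \<Rightarrow> trm \<Rightarrow> trm" where
  "close_rec k x (BVar i) = BVar i"
| "close_rec k x (FVar y) = (if y = x then BVar k else FVar y)"
| "close_rec k x (Univ i) = Univ i"
| "close_rec k x (Pi A B) = Pi (close_rec k x A) (close_rec (Suc k) x B)"
| "close_rec k x (App L M) = App (close_rec k x L) (close_rec k x M)"
| "close_rec k x (Lam A M) = Lam (close_rec k x A) (close_rec (Suc k) x M)"

lemma lc_at_mono: "lc_at k t \<Longrightarrow> k \<le> j \<Longrightarrow> lc_at j t"
  by (induction t arbitrary: k j) force+

lemma open_rec_lc: "lc_at k t \<Longrightarrow> k \<le> j \<Longrightarrow> open_rec j u t = t"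
  by (induction t arbitrary: k j) force+

lemma subst_open_rec: "lc u \<Longrightarrow> subst x u (open_rec k v t) = open_rec k (subst x u v) (subst x u t)"
  by (induction t arbitrary: k) (auto simp: open_rec_lc)

lemma subst_opn: "lc u \<Longrightarrow> subst x u (opn t v) = opn (subst x u t) (subst x u v)"
  by (simp add: opn_def subst_open_rec)

lemma subst_opn_var: "lc u \<Longrightarrow> y \<noteq> x \<Longrightarrow> subst x u (opn t (FVar y)) = opn (subst x u t) (FVar y)"
  by (simp add: subst_opn)

lemma subst_fresh: "x \<notin> fv t \<Longrightarrow> subst x u t = t"
  by (induction t) auto

lemma subst_intro_rec: "x \<notin> fv t \<Longrightarrow> open_rec k u t = subst x u (open_rec k (FVar x) t)"
  by (induction t arbitrary: k) auto

lemma subst_intro: "x \<notin> fv t \<Longrightarrow> opn t u = subst x u (opn t (FVar x))"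
  unfolding opn_def by (rule subst_intro_rec)

lemma fv_open_rec_sub: "fv (open_rec k u t) \<subseteq> fv t \<union> fv u"
  by (induction t arbitrary: k) auto

lemma fv_open_rec_sup: "fv t \<subseteq> fv (open_rec k u t)"
  by (induction t arbitrary: k) auto

lemma fv_opn_sub: "fv (opn t u) \<subseteq> fv t \<union> fv u"
  by (simp add: opn_def fv_open_rec_sub)

lemma fv_opn_sup: "fv t \<subseteq> fv (opn t u)"
  by (simp add: opn_def fv_open_rec_sup)

lemma lc_open_rec: "lc_at (Suc k) t \<Longrightarrow> lc u \<Longrightarrow> lc_at k (open_rec k u t)"
  by (induction t arbitrary: k) (auto intro: lc_at_mono)

lemma lc_opn: "lc_at (Suc 0) t \<Longrightarrow> lc u \<Longrightarrow> lc (opn t u)"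
  by (simp add: opn_def lc_open_rec)

lemma lc_open_rec_inv: "lc_at k (open_rec k u t) \<Longrightarrow> lc_at (Suc k) t"
  by (induction t arbitrary: k) (auto split: if_splits)

lemma lc_opn_inv: "lc (opn t u) \<Longrightarrow> lc_at (Suc 0) t"
  by (simp add: opn_def lc_open_rec_inv)

lemma lc_subst: "lc_at k t \<Longrightarrow> lc u \<Longrightarrow> lc_at k (subst x u t)"
  by (induction t arbitrary: k) (auto intro: lc_at_mono)

lemma fv_subst_sub: "fv (subst x u t) \<subseteq> (fv t - {x}) \<union> fv u"
  by (induction t) auto

lemma fv_subst_sup: "fv t - {x} \<subseteq> fv (subst x u t)"
  by (induction t) auto

lemma fv_close: "x \<notin> fv (close_rec k x t)"
  by (induction t arbitrary: k) auto

lemma fv_close_sub: "fv (close_rec k x t) \<subseteq> fv t"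
  by (induction t arbitrary: k) auto

lemma close_open_rec: "x \<notin> fv t \<Longrightarrow> close_rec k x (open_rec k (FVar x) t) = t"
  by (induction t arbitrary: k) auto

lemma open_close_rec: "lc_at k t \<Longrightarrow> open_rec k (FVar x) (close_rec k x t) = t"
  by (induction t arbitrary: k) auto

lemma lc_close_rec: "lc_at k t \<Longrightarrow> lc_at (Suc k) (close_rec k x t)"
  by (induction t arbitrary: k) auto

definition cls :: "name \<Rightarrow> trm \<Rightarrow> trm" where "cls x t = close_rec 0 x t"

lemma opn_cls: "lc t \<Longrightarrow> opn (cls x t) (FVar x) = t"
  by (simp add: opn_def cls_def open_close_rec)

lemma cls_opn: "x \<notin> fv t \<Longrightarrow> cls x (opn t (FVar x)) = t"
  by (simp add: opn_def cls_def close_open_rec)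

lemma fv_cls: "x \<notin> fv (cls x t)" by (simp add: cls_def fv_close)
lemma fv_cls_sub: "fv (cls x t) \<subseteq> fv t" by (simp add: cls_def fv_close_sub)
lemma lc_cls: "lc t \<Longrightarrow> lc_at (Suc 0) (cls x t)" by (simp add: cls_def lc_close_rec)

lemma open_rec_inj: "x \<notin> fv B \<Longrightarrow> x \<notin> fv B' \<Longrightarrow> open_rec k (FVar x) B = open_rec k (FVar x) B' \<Longrightarrow> B = B'"
proof (induction B arbitrary: B' k)
  case (BVar i) then show ?case by (cases B'; simp split: if_splits)
next
  case (FVar y) then show ?case by (cases B'; simp split: if_splits)
next
  case (Univ i) then show ?case by (cases B'; simp split: if_splits)
next
  case (Pi A B) then show ?case by (cases B'; simp split: if_splits; blast)
next
  case (App A B) then show ?case by (cases B'; simp split: if_splits; blast)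
next
  case (Lam A B) then show ?case by (cases B'; simp split: if_splits; blast)
qed

lemma opn_inj: "x \<notin> fv B \<Longrightarrow> x \<notin> fv B' \<Longrightarrow> opn B (FVar x) = opn B' (FVar x) \<Longrightarrow> B = B'"
  by (simp add: opn_def open_rec_inj)

lemma size_open_rec: "size (open_rec k (FVar x) t) = size t"
  by (induction t arbitrary: k) auto

lemma opn_Univ: "opn B (FVar x) = Univ k \<Longrightarrow> B = Univ k"
  by (cases B) (auto simp: opn_def split: if_splits)

lemma subst_var_rename: "x \<notin> fv t \<Longrightarrow> subst x (FVar y) (opn t (FVar x)) = opn t (FVar y)"
  by (metis subst_intro)

lemma finite_fv: "finite (fv t)" by (induction t) auto

lemma fresh_ex: "finite (S::name set) \<Longrightarrow> \<exists>x. x \<notin> S"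
  using infinite_UNIV_nat by (meson ex_new_if_finite)

lemma red_lc: "red t t' \<Longrightarrow> lc t \<Longrightarrow> lc t'"
proof (induction rule: red.induct)
  case (beta A N M) then show ?case by (simp add: lc_opn)
next
  case (pi2 S B B' A)
  obtain x where x: "x \<notin> S" using pi2.hyps(1) fresh_ex by blast
  have "lc (opn B' (FVar x))" using pi2 x by (simp add: lc_opn)
  then show ?case using pi2 lc_opn_inv by auto
next
  case (lam2 S M M' A)
  obtain x where x: "x \<notin> S" using lam2.hyps(1) fresh_ex by blast
  have "lc (opn M' (FVar x))" using lam2 x by (simp add: lc_opn)
  then show ?case using lam2 lc_opn_inv by auto
qed auto

lemma reds_lc: "reds t t' \<Longrightarrow> lc t \<Longrightarrow> lc t'"
  by (induction rule: rtranclp_induct) (auto intro: red_lc)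

lemma red_subst: "red t t' \<Longrightarrow> lc u \<Longrightarrow> red (subst x u t) (subst x u t')"
proof (induction rule: red.induct)
  case (beta A N M)
  show ?case using red.beta[of "subst x u A" "subst x u N" "subst x u M"] beta
    by (simp add: subst_opn)
next
  case (pi2 S B B' A)
  show ?case
  proof (simp, rule red.pi2[of "S \<union> {x}"])
    show "finite (S \<union> {x})" using pi2 by simp
    fix y assume "y \<notin> S \<union> {x}"
    then show "red (opn (subst x u B) (FVar y)) (opn (subst x u B') (FVar y))"
      using pi2 by (metis UnCI insertCI subst_opn_var)
  qed
next
  case (lam2 S M M' A)
  show ?case
  proof (simp, rule red.lam2[of "S \<union> {x}"])
    show "finite (S \<union> {x})" using lam2 by simp
    fix y assume "y \<notin> S \<union> {x}"
    then show "red (opn (subst x u M) (FVar y)) (opn (subst x u M') (FVar y))"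
      using lam2 by (metis UnCI insertCI subst_opn_var)
  qed
qed (auto intro: red.intros)

lemma reds_subst: "reds t t' \<Longrightarrow> lc u \<Longrightarrow> reds (subst x u t) (subst x u t')"
  by (induction rule: rtranclp_induct) (auto intro: red_subst rtranclp.rtrancl_into_rtrancl)

lemma reds_cong: "reds a b \<Longrightarrow> (\<And>x y. red x y \<Longrightarrow> red (f x) (f y)) \<Longrightarrow> reds (f a) (f b)"
  by (induction rule: rtranclp_induct) (auto intro: rtranclp.rtrancl_into_rtrancl)

lemma reds_app1: "reds L L' \<Longrightarrow> reds (App L M) (App L' M)"
  by (rule reds_cong[where f="\<lambda>L. App L M"]) (auto intro: red.intros)
lemma reds_app2: "reds M M' \<Longrightarrow> reds (App L M) (App L M')"
  by (rule reds_cong[where f="\<lambda>M. App L M"]) (auto intro: red.intros)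
lemma reds_app: "reds L L' \<Longrightarrow> reds M M' \<Longrightarrow> reds (App L M) (App L' M')"
  by (meson reds_app1 reds_app2 rtranclp_trans)
lemma reds_pi1: "reds A A' \<Longrightarrow> reds (Pi A B) (Pi A' B)"
  by (rule reds_cong[where f="\<lambda>A. Pi A B"]) (auto intro: red.intros)
lemma reds_lam1: "reds A A' \<Longrightarrow> reds (Lam A B) (Lam A' B)"
  by (rule reds_cong[where f="\<lambda>A. Lam A B"]) (auto intro: red.intros)

lemma red_pi2_one: "red (opn B (FVar x)) (opn B' (FVar x)) \<Longrightarrow> x \<notin> fv B \<Longrightarrow> x \<notin> fv B'
   \<Longrightarrow> red (Pi A B) (Pi A B')"
proof (rule red.pi2[of "{x}"])
  fix y assume h: "red (opn B (FVar x)) (opn B' (FVar x))" "x \<notin> fv B" "x \<notin> fv B'" "y \<notin> {x}"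
  have "red (subst x (FVar y) (opn B (FVar x))) (subst x (FVar y) (opn B' (FVar x)))"
    using h by (intro red_subst) auto
  then show "red (opn B (FVar y)) (opn B' (FVar y))" using h by (simp add: subst_var_rename)
qed simp

lemma red_lam2_one: "red (opn B (FVar x)) (opn B' (FVar x)) \<Longrightarrow> x \<notin> fv B \<Longrightarrow> x \<notin> fv B'
   \<Longrightarrow> red (Lam A B) (Lam A B')"
proof (rule red.lam2[of "{x}"])
  fix y assume h: "red (opn B (FVar x)) (opn B' (FVar x))" "x \<notin> fv B" "x \<notin> fv B'" "y \<notin> {x}"
  have "red (subst x (FVar y) (opn B (FVar x))) (subst x (FVar y) (opn B' (FVar x)))"
    using h by (intro red_subst) auto
  then show "red (opn B (FVar y)) (opn B' (FVar y))" using h by (simp add: subst_var_rename)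
qed simp

lemma reds_pi2_gen: "reds s t \<Longrightarrow> lc s \<Longrightarrow> s = opn B (FVar x) \<Longrightarrow> x \<notin> fv B
   \<Longrightarrow> reds (Pi A B) (Pi A (cls x t))"
proof (induction rule: rtranclp_induct)
  case base then show ?case by (simp add: cls_opn)
next
  case (step t t')
  have lt: "lc t" using step reds_lc by blast
  have "lc t'" using lt step red_lc by blast
  then have "red (opn (cls x t) (FVar x)) (opn (cls x t') (FVar x))" using lt step by (simp add: opn_cls)
  then have "red (Pi A (cls x t)) (Pi A (cls x t'))" by (rule red_pi2_one) (simp_all add: fv_cls)
  then show ?case using step by (meson rtranclp.rtrancl_into_rtrancl)
qed

lemma reds_lam2_gen: "reds s t \<Longrightarrow> lc s \<Longrightarrow> s = opn B (FVar x) \<Longrightarrow> x \<notin> fv B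
   \<Longrightarrow> reds (Lam A B) (Lam A (cls x t))"
proof (induction rule: rtranclp_induct)
  case base then show ?case by (simp add: cls_opn)
next
  case (step t t')
  have lt: "lc t" using step reds_lc by blast
  have "lc t'" using lt step red_lc by blast
  then have "red (opn (cls x t) (FVar x)) (opn (cls x t') (FVar x))" using lt step by (simp add: opn_cls)
  then have "red (Lam A (cls x t)) (Lam A (cls x t'))" by (rule red_lam2_one) (simp_all add: fv_cls)
  then show ?case using step by (meson rtranclp.rtrancl_into_rtrancl)
qed

lemma reds_pi2: "finite S \<Longrightarrow> (\<And>x. x \<notin> S \<Longrightarrow> reds (opn B (FVar x)) (opn B' (FVar x))) \<Longrightarrow> lc_at (Suc 0) B
  \<Longrightarrow> reds (Pi A B) (Pi A B')"
proof -
  assume S: "finite S" and h: "\<And>x. x \<notin> S \<Longrightarrow> reds (opn B (FVar x)) (opn B' (FVar x))" and l: "lc_at (Suc 0) B"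
  obtain x where x: "x \<notin> S \<union> fv B \<union> fv B'" using S fresh_ex[of "S \<union> fv B \<union> fv B'"] finite_fv by auto
  have "reds (Pi A B) (Pi A (cls x (opn B' (FVar x))))"
    using x h l by (intro reds_pi2_gen[OF _ _ refl]) (auto simp: lc_opn)
  then show ?thesis using x by (simp add: cls_opn)
qed

lemma reds_lam2: "finite S \<Longrightarrow> (\<And>x. x \<notin> S \<Longrightarrow> reds (opn B (FVar x)) (opn B' (FVar x))) \<Longrightarrow> lc_at (Suc 0) B
  \<Longrightarrow> reds (Lam A B) (Lam A B')"
proof -
  assume S: "finite S" and h: "\<And>x. x \<notin> S \<Longrightarrow> reds (opn B (FVar x)) (opn B' (FVar x))" and l: "lc_at (Suc 0) B"
  obtain x where x: "x \<notin> S \<union> fv B \<union> fv B'" using S fresh_ex[of "S \<union> fv B \<union> fv B'"] finite_fv by auto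
  have "reds (Lam A B) (Lam A (cls x (opn B' (FVar x))))"
    using x h l by (intro reds_lam2_gen[OF _ _ refl]) (auto simp: lc_opn)
  then show ?thesis using x by (simp add: cls_opn)
qed

lemma red_Univ: "\<not> red (Univ i) t" by (auto elim: red.cases)
lemma reds_Univ: "reds (Univ i) t \<Longrightarrow> t = Univ i"
  by (induction rule: rtranclp_induct) (auto simp: red_Univ)
lemma red_FVar: "\<not> red (FVar x) t" by (auto elim: red.cases)
lemma reds_FVar: "reds (FVar x) t \<Longrightarrow> t = FVar x"
  by (induction rule: rtranclp_induct) (auto simp: red_FVar)

lemma red_Pi_inv: "red (Pi A B) T \<Longrightarrow> \<exists>A' B'. T = Pi A' B' \<and> reds A A' \<and>
   (\<exists>S. finite S \<and> (\<forall>x. x \<notin> S \<longrightarrow> reds (opn B (FVar x)) (opn B' (FVar x))))"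
  by (erule red.cases) auto

lemma reds_Pi_inv: "reds (Pi A B) T \<Longrightarrow> \<exists>A' B'. T = Pi A' B' \<and> reds A A' \<and>
   (\<exists>S. finite S \<and> (\<forall>x. x \<notin> S \<longrightarrow> reds (opn B (FVar x)) (opn B' (FVar x))))"
proof (induction rule: rtranclp_induct)
  case base then show ?case by auto
next
  case (step T T')
  then obtain A1 B1 S1 where 1: "T = Pi A1 B1" "reds A A1" "finite S1"
     "\<forall>x. x \<notin> S1 \<longrightarrow> reds (opn B (FVar x)) (opn B1 (FVar x))" by blast
  then obtain A2 B2 S2 where 2: "T' = Pi A2 B2" "reds A1 A2" "finite S2"
     "\<forall>x. x \<notin> S2 \<longrightarrow> reds (opn B1 (FVar x)) (opn B2 (FVar x))" using red_Pi_inv step by blast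
  show ?case using 1 2 by (intro exI[of _ A2] exI[of _ B2] conjI exI[of _ "S1 \<union> S2"])
     (auto intro: rtranclp_trans)
qed

lemma red_Lam_inv: "red (Lam A B) T \<Longrightarrow> \<exists>A' B'. T = Lam A' B'"
  by (erule red.cases) auto

lemma reds_Lam_inv: "reds (Lam A B) T \<Longrightarrow> \<exists>A' B'. T = Lam A' B'"
  by (induction rule: rtranclp_induct) (auto dest: red_Lam_inv)

lemma reds_opn_body: "finite S \<Longrightarrow> (\<And>x. x \<notin> S \<Longrightarrow> reds (opn B (FVar x)) (opn B' (FVar x))) \<Longrightarrow> lc N
  \<Longrightarrow> reds (opn B N) (opn B' N)"
proof -
  assume S: "finite S" and h: "\<And>x. x \<notin> S \<Longrightarrow> reds (opn B (FVar x)) (opn B' (FVar x))" and l: "lc N"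
  obtain x where x: "x \<notin> S \<union> fv B \<union> fv B'" using S fresh_ex[of "S \<union> fv B \<union> fv B'"] finite_fv by auto
  have "reds (subst x N (opn B (FVar x))) (subst x N (opn B' (FVar x)))"
    using x h l by (intro reds_subst) auto
  then show ?thesis using x by (metis UnCI subst_intro)
qed

inductive par :: "trm \<Rightarrow> trm \<Rightarrow> bool" where
  p_bvar: "par (BVar i) (BVar i)"
| p_fvar: "par (FVar x) (FVar x)"
| p_univ: "par (Univ i) (Univ i)"
| p_pi: "par A A' \<Longrightarrow> finite S \<Longrightarrow> (\<And>x. x \<notin> S \<Longrightarrow> par (opn B (FVar x)) (opn B' (FVar x)))
         \<Longrightarrow> par (Pi A B) (Pi A' B')"
| p_lam: "par A A' \<Longrightarrow> finite S \<Longrightarrow> (\<And>x. x \<notin> S \<Longrightarrow> par (opn B (FVar x)) (opn B' (FVar x)))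
         \<Longrightarrow> par (Lam A B) (Lam A' B')"
| p_app: "par M M' \<Longrightarrow> par N N' \<Longrightarrow> par (App M N) (App M' N')"
| p_beta: "finite S \<Longrightarrow> (\<And>x. x \<notin> S \<Longrightarrow> par (opn D (FVar x)) (opn D' (FVar x))) \<Longrightarrow> par N N'
         \<Longrightarrow> par (App (Lam A D) N) (opn D' N')"

lemma par_refl: "par t t"
proof (induction "size t" arbitrary: t rule: less_induct)
  case less
  show ?case
  proof (cases t)
    case (Pi A B)
    have "\<And>x. par (opn B (FVar x)) (opn B (FVar x))"
      using less Pi by (simp add: opn_def size_open_rec)
    then show ?thesis using Pi less by (auto intro!: par.p_pi[of _ _ "{}"])
  next
    case (Lam A B)
    have "\<And>x. par (opn B (FVar x)) (opn B (FVar x))"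
      using less Lam by (simp add: opn_def size_open_rec)
    then show ?thesis using Lam less by (auto intro!: par.p_lam[of _ _ "{}"])
  next
    case (App M N) then show ?thesis using less by (auto intro!: p_app)
  qed (auto intro: par.intros)
qed

lemma par_lc: "par t t' \<Longrightarrow> lc t \<Longrightarrow> lc t'"
proof (induction rule: par.induct)
  case (p_pi A A' S B B')
  obtain x where x: "x \<notin> S" using p_pi fresh_ex by blast
  have "lc (opn B' (FVar x))" using p_pi x by (simp add: lc_opn)
  then show ?case using p_pi lc_opn_inv by auto
next
  case (p_lam A A' S B B')
  obtain x where x: "x \<notin> S" using p_lam fresh_ex by blast
  have "lc (opn B' (FVar x))" using p_lam x by (simp add: lc_opn)
  then show ?case using p_lam lc_opn_inv by auto
next
  case (p_beta S D D' N N' A)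
  obtain x where x: "x \<notin> S" using p_beta fresh_ex by blast
  have "lc (opn D' (FVar x))" using p_beta x by (simp add: lc_opn)
  then have "lc_at (Suc 0) D'" using lc_opn_inv by auto
  then show ?case using p_beta by (simp add: lc_opn)
qed auto

lemma par_subst: "par t t' \<Longrightarrow> par u u' \<Longrightarrow> lc u \<Longrightarrow> lc u' \<Longrightarrow> par (subst x u t) (subst x u' t')"
proof (induction rule: par.induct)
  case (p_fvar y) then show ?case by (auto intro: par.intros)
next
  case (p_pi A A' S B B')
  show ?case
  proof (simp, rule par.p_pi[of _ _ "S \<union> {x}"])
    fix y assume "y \<notin> S \<union> {x}"
    then show "par (opn (subst x u B) (FVar y)) (opn (subst x u' B') (FVar y))"
      using p_pi by (metis UnCI insertCI subst_opn_var)
  qed (use p_pi in auto)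
next
  case (p_lam A A' S B B')
  show ?case
  proof (simp, rule par.p_lam[of _ _ "S \<union> {x}"])
    fix y assume "y \<notin> S \<union> {x}"
    then show "par (opn (subst x u B) (FVar y)) (opn (subst x u' B') (FVar y))"
      using p_lam by (metis UnCI insertCI subst_opn_var)
  qed (use p_lam in auto)
next
  case (p_beta S D D' N N' A)
  have "par (App (Lam (subst x u A) (subst x u D)) (subst x u N)) (opn (subst x u' D') (subst x u' N'))"
  proof (rule par.p_beta[of "S \<union> {x}"])
    fix y assume "y \<notin> S \<union> {x}"
    then show "par (opn (subst x u D) (FVar y)) (opn (subst x u' D') (FVar y))"
      using p_beta by (metis UnCI insertCI subst_opn_var)
  qed (use p_beta in auto)
  then show ?case using p_beta by (simp add: subst_opn)
qed (auto intro: par.intros)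

lemma par_rename: "par (opn B (FVar x)) (opn B' (FVar x)) \<Longrightarrow> x \<notin> fv B \<Longrightarrow> x \<notin> fv B'
  \<Longrightarrow> par (opn B (FVar y)) (opn B' (FVar y))"
  using par_subst[of "opn B (FVar x)" "opn B' (FVar x)" "FVar y" "FVar y" x]
  by (simp add: subst_var_rename p_fvar)

lemma par_open: "finite S \<Longrightarrow> (\<And>x. x \<notin> S \<Longrightarrow> par (opn D (FVar x)) (opn D' (FVar x))) \<Longrightarrow> par N N'
  \<Longrightarrow> lc N \<Longrightarrow> lc N' \<Longrightarrow> par (opn D N) (opn D' N')"
proof -
  assume S: "finite S" and h: "\<And>x. x \<notin> S \<Longrightarrow> par (opn D (FVar x)) (opn D' (FVar x))"
    and p: "par N N'" and l: "lc N" "lc N'"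
  obtain x where x: "x \<notin> S \<union> fv D \<union> fv D'" using S fresh_ex[of "S \<union> fv D \<union> fv D'"] finite_fv by auto
  have "par (subst x N (opn D (FVar x))) (subst x N' (opn D' (FVar x)))"
    using x h l p by (intro par_subst) auto
  then show ?thesis using x by (metis UnCI subst_intro)
qed

lemma red_par: "red t t' \<Longrightarrow> par t t'"
proof (induction rule: red.induct)
  case (beta A N M) then show ?case using par.p_beta[of "{}" N N M M A] par_refl by auto
next
  case (pi1 A A' B) then show ?case using par.p_pi[of A A' "{}" B B] par_refl by auto
next
  case (pi2 S B B' A) then show ?case using par.p_pi[of A A S B B'] par_refl by auto
next
  case (lam1 A A' B) then show ?case using par.p_lam[of A A' "{}" B B] par_refl by auto
next
  case (lam2 S B B' A) then show ?case using par.p_lam[of A A S B B'] par_refl by auto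
qed (auto intro: par.intros par_refl)

lemma par_reds: "par t t' \<Longrightarrow> lc t \<Longrightarrow> reds t t'"
proof (induction rule: par.induct)
  case (p_pi A A' S B B')
  have "reds (Pi A B) (Pi A' B)" using p_pi by (auto intro: reds_pi1)
  moreover have "reds (Pi A' B) (Pi A' B')"
    using p_pi by (intro reds_pi2[of S]) (auto simp: lc_opn)
  ultimately show ?case by (rule rtranclp_trans)
next
  case (p_lam A A' S B B')
  have "reds (Lam A B) (Lam A' B)" using p_lam by (auto intro: reds_lam1)
  moreover have "reds (Lam A' B) (Lam A' B')"
    using p_lam by (intro reds_lam2[of S]) (auto simp: lc_opn)
  ultimately show ?case by (rule rtranclp_trans)
next
  case (p_app M M' N N') then show ?case by (auto intro: reds_app)
next
  case (p_beta S D D' N N' A)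
  have "reds (Lam A D) (Lam A D')"
    using p_beta by (intro reds_lam2[of S]) (auto simp: lc_opn)
  then have "reds (App (Lam A D) N) (App (Lam A D') N')" using p_beta by (auto intro: reds_app)
  then show ?case by (meson red.beta rtranclp.rtrancl_into_rtrancl)
qed auto

lemma par_Lam_inv: "par (Lam A D) t \<Longrightarrow> \<exists>A' D' S. t = Lam A' D' \<and> par A A' \<and> finite S \<and>
   (\<forall>x. x \<notin> S \<longrightarrow> par (opn D (FVar x)) (opn D' (FVar x)))"
  by (erule par.cases) auto

lemma par_Pi_inv: "par (Pi A D) t \<Longrightarrow> \<exists>A' D' S. t = Pi A' D' \<and> par A A' \<and> finite S \<and>
   (\<forall>x. x \<notin> S \<longrightarrow> par (opn D (FVar x)) (opn D' (FVar x)))"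
  by (erule par.cases) auto

lemma par_AppLam_inv: "par (App (Lam A D) N) t \<Longrightarrow>
   (\<exists>L2 N2. t = App L2 N2 \<and> par (Lam A D) L2 \<and> par N N2) \<or>
   (\<exists>S2 D2 N2. t = opn D2 N2 \<and> finite S2 \<and> (\<forall>x. x \<notin> S2 \<longrightarrow> par (opn D (FVar x)) (opn D2 (FVar x))) \<and> par N N2)"
  by (erule par.cases) (simp_all, blast+)

lemma body_diamond:
  assumes S1: "finite S1" and S2: "finite S2"
    and h1: "\<And>x. x \<notin> S1 \<Longrightarrow> par (opn B (FVar x)) (opn B1 (FVar x)) \<and>
        (\<forall>t2. par (opn B (FVar x)) t2 \<longrightarrow> lc (opn B (FVar x)) \<longrightarrow> (\<exists>t3. par (opn B1 (FVar x)) t3 \<and> par t2 t3))"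
    and h2: "\<And>x. x \<notin> S2 \<Longrightarrow> par (opn B (FVar x)) (opn B2 (FVar x))"
    and l: "lc_at (Suc 0) B"
  shows "\<exists>B3. (\<forall>y. y \<notin> fv B1 \<union> fv B3 \<longrightarrow> par (opn B1 (FVar y)) (opn B3 (FVar y))) \<and>
              (\<forall>y. y \<notin> fv B2 \<union> fv B3 \<longrightarrow> par (opn B2 (FVar y)) (opn B3 (FVar y)))"
proof -
  obtain x where x: "x \<notin> S1 \<union> S2 \<union> fv B \<union> fv B1 \<union> fv B2"
    using S1 S2 fresh_ex[of "S1 \<union> S2 \<union> fv B \<union> fv B1 \<union> fv B2"] finite_fv by auto
  have lB: "lc (opn B (FVar x))" using l by (simp add: lc_opn)
  obtain t3 where t3: "par (opn B1 (FVar x)) t3" "par (opn B2 (FVar x)) t3"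
    using h1[of x] h2[of x] x lB by blast
  have "lc (opn B1 (FVar x))" using h1[of x] x lB par_lc by blast
  then have lt3: "lc t3" using t3 par_lc by blast
  define B3 where "B3 = cls x t3"
  have e: "opn B3 (FVar x) = t3" using lt3 by (simp add: B3_def opn_cls)
  have f: "x \<notin> fv B3" by (simp add: B3_def fv_cls)
  show ?thesis
    by (rule exI[of _ B3]) (use t3 e f x in \<open>auto intro: par_rename\<close>)
qed

lemma par_diamond: "par t t1 \<Longrightarrow> par t t2 \<Longrightarrow> lc t \<Longrightarrow> \<exists>t3. par t1 t3 \<and> par t2 t3"
proof (induction arbitrary: t2 rule: par.induct)
  case (p_bvar i) then show ?case by (auto elim: par.cases)
next
  case (p_fvar x) then show ?case by (auto elim: par.cases)
next
  case (p_univ i) then show ?case by (auto elim: par.cases)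
next
  case (p_pi A A1 S1 B B1)
  obtain A2 B2 S2 where 2: "t2 = Pi A2 B2" "par A A2" "finite S2"
    "\<forall>x. x \<notin> S2 \<longrightarrow> par (opn B (FVar x)) (opn B2 (FVar x))" using p_pi par_Pi_inv by blast
  obtain A3 where A3: "par A1 A3" "par A2 A3" using p_pi.IH(1) 2(2) p_pi.prems(2) by auto
  obtain B3 where B3: "\<forall>y. y \<notin> fv B1 \<union> fv B3 \<longrightarrow> par (opn B1 (FVar y)) (opn B3 (FVar y))"
     "\<forall>y. y \<notin> fv B2 \<union> fv B3 \<longrightarrow> par (opn B2 (FVar y)) (opn B3 (FVar y))"
    using body_diamond[of S1 S2 B B1 B2] p_pi 2 by auto
  have "par (Pi A1 B1) (Pi A3 B3)" using A3 B3 by (intro par.p_pi[of _ _ "fv B1 \<union> fv B3"]) (auto simp: finite_fv)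
  moreover have "par (Pi A2 B2) (Pi A3 B3)" using A3 B3 by (intro par.p_pi[of _ _ "fv B2 \<union> fv B3"]) (auto simp: finite_fv)
  ultimately show ?case using 2 by auto
next
  case (p_lam A A1 S1 B B1)
  obtain A2 B2 S2 where 2: "t2 = Lam A2 B2" "par A A2" "finite S2"
    "\<forall>x. x \<notin> S2 \<longrightarrow> par (opn B (FVar x)) (opn B2 (FVar x))" using p_lam par_Lam_inv by blast
  obtain A3 where A3: "par A1 A3" "par A2 A3" using p_lam.IH(1) 2(2) p_lam.prems(2) by auto
  obtain B3 where B3: "\<forall>y. y \<notin> fv B1 \<union> fv B3 \<longrightarrow> par (opn B1 (FVar y)) (opn B3 (FVar y))"
     "\<forall>y. y \<notin> fv B2 \<union> fv B3 \<longrightarrow> par (opn B2 (FVar y)) (opn B3 (FVar y))"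
    using body_diamond[of S1 S2 B B1 B2] p_lam 2 by auto
  have "par (Lam A1 B1) (Lam A3 B3)" using A3 B3 by (intro par.p_lam[of _ _ "fv B1 \<union> fv B3"]) (auto simp: finite_fv)
  moreover have "par (Lam A2 B2) (Lam A3 B3)" using A3 B3 by (intro par.p_lam[of _ _ "fv B2 \<union> fv B3"]) (auto simp: finite_fv)
  ultimately show ?case using 2 by auto
next
  case (p_app M M1 N N1)
  from p_app.prems(1) show ?case
  proof (cases rule: par.cases)
    case (p_app M2 N2)
    have l: "lc M" "lc N" using p_app.prems by auto
    obtain M3 where M3: "par M1 M3" "par M2 M3" using p_app.IH(1) l(1) p_app(2) by blast
    obtain N3 where N3: "par N1 N3" "par N2 N3" using p_app.IH(2) l(2) p_app(3) by blast
    show ?thesis using M3 N3 p_app(1) par.p_app by blast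
  next
    case (p_beta S2 D D2 N2 A)
    have lN: "lc N" using p_app.prems p_beta by simp
    have lM: "lc M" using p_app.prems p_beta by simp
    obtain A1 D1 S1 where 1: "M1 = Lam A1 D1" "finite S1"
       "\<forall>x. x \<notin> S1 \<longrightarrow> par (opn D (FVar x)) (opn D1 (FVar x))"
      using p_app.hyps(1) p_beta par_Lam_inv by blast
    have "par (Lam A D) (Lam A D2)" by (rule par.p_lam[OF par_refl, of S2]) (use p_beta in auto)
    then obtain t3 where t3: "par M1 t3" "par (Lam A D2) t3" using p_app.IH(1) lM p_beta by blast
    then obtain A3 D3 S3 where 3: "t3 = Lam A3 D3" "finite S3"
       "\<forall>x. x \<notin> S3 \<longrightarrow> par (opn D2 (FVar x)) (opn D3 (FVar x))" using par_Lam_inv by blast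
    obtain A13 D13 S13 where 13: "Lam A3 D3 = Lam A13 D13" "finite S13" "\<forall>x. x \<notin> S13 \<longrightarrow> par (opn D1 (FVar x)) (opn D13 (FVar x))"
      using t3(1) 1(1) 3(1) par_Lam_inv[of A1 D1 t3] by blast
    have 13: "finite S13" "\<forall>x. x \<notin> S13 \<longrightarrow> par (opn D1 (FVar x)) (opn D3 (FVar x))" using 13 by auto
    obtain N3 where N3: "par N1 N3" "par N2 N3" using p_app.IH(2) lN p_beta by blast
    have lN2: "lc N2" using lN p_beta par_lc by blast
    have lN3: "lc N3" using lN2 N3 par_lc by blast
    have "par (App (Lam A1 D1) N1) (opn D3 N3)" using 13 N3 by (intro par.p_beta[of S13]) auto
    moreover have "par (opn D2 N2) (opn D3 N3)" by (rule par_open[of S3]) (use 3 N3 lN2 lN3 in auto)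
    ultimately show ?thesis using p_beta 1 by auto
  qed
next
  case (p_beta S1 D D1 N N1 A)
  note IHb = p_beta.IH(1) and IHN = p_beta.IH(2) and hb = p_beta.hyps
  have lN: "lc N" and lD: "lc_at (Suc 0) D" using p_beta.prems by auto
  have lN1: "lc N1" using lN hb par_lc by blast
  have H1: "\<And>x. x \<notin> S1 \<Longrightarrow> par (opn D (FVar x)) (opn D1 (FVar x)) \<and>
        (\<forall>t2. par (opn D (FVar x)) t2 \<longrightarrow> lc (opn D (FVar x)) \<longrightarrow> (\<exists>t3. par (opn D1 (FVar x)) t3 \<and> par t2 t3))"
    using IHb hb by blast
  from par_AppLam_inv[OF p_beta.prems(1)] show ?case
  proof (elim disjE exE conjE)
    fix L2 N2 assume p_app: "t2 = App L2 N2" "par (Lam A D) L2" "par N N2"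
    obtain A2 D2 S2 where 2: "L2 = Lam A2 D2" "finite S2"
       "\<forall>x. x \<notin> S2 \<longrightarrow> par (opn D (FVar x)) (opn D2 (FVar x))"
      using p_app par_Lam_inv by blast
    obtain D3 where D3: "\<forall>y. y \<notin> fv D1 \<union> fv D3 \<longrightarrow> par (opn D1 (FVar y)) (opn D3 (FVar y))"
     "\<forall>y. y \<notin> fv D2 \<union> fv D3 \<longrightarrow> par (opn D2 (FVar y)) (opn D3 (FVar y))"
      using body_diamond[of S1 S2 D D1 D2] H1 hb 2 lD by blast
    obtain N3 where N3: "par N1 N3" "par N2 N3" using IHN lN p_app by blast
    have lN3: "lc N3" using lN1 N3 par_lc by blast
    have "par (opn D1 N1) (opn D3 N3)" by (rule par_open[of "fv D1 \<union> fv D3"]) (use D3 N3 lN1 lN3 in \<open>auto simp: finite_fv\<close>)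
    moreover have "par (App (Lam A2 D2) N2) (opn D3 N3)" using D3 N3 by (intro par.p_beta[of "fv D2 \<union> fv D3"]) (auto simp: finite_fv)
    ultimately show ?thesis using p_app 2 by auto
  next
    fix S2 D2 N2 assume p_beta: "t2 = opn D2 N2" "finite S2" "\<forall>x. x \<notin> S2 \<longrightarrow> par (opn D (FVar x)) (opn D2 (FVar x))" "par N N2"
    have e: "D = D" "N = N" by auto
    obtain D3 where D3: "\<forall>y. y \<notin> fv D1 \<union> fv D3 \<longrightarrow> par (opn D1 (FVar y)) (opn D3 (FVar y))"
     "\<forall>y. y \<notin> fv D2 \<union> fv D3 \<longrightarrow> par (opn D2 (FVar y)) (opn D3 (FVar y))"
      using body_diamond[of S1 S2 D D1 D2] H1 hb p_beta e lD by blast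
    obtain N3 where N3: "par N1 N3" "par N2 N3" using IHN lN p_beta e by blast
    have lN2: "lc N2" using lN p_beta e par_lc by blast
    have lN3: "lc N3" using lN1 N3 par_lc by blast
    have "par (opn D1 N1) (opn D3 N3)" by (rule par_open[of "fv D1 \<union> fv D3"]) (use D3 N3 lN1 lN3 in \<open>auto simp: finite_fv\<close>)
    moreover have "par (opn D2 N2) (opn D3 N3)" by (rule par_open[of "fv D2 \<union> fv D3"]) (use D3 N3 lN2 lN3 in \<open>auto simp: finite_fv\<close>)
    ultimately show ?thesis using p_beta by auto
  qed
qed

lemma par_strip: "par\<^sup>*\<^sup>* t t2 \<Longrightarrow> par t t1 \<Longrightarrow> lc t \<Longrightarrow> \<exists>t3. par\<^sup>*\<^sup>* t1 t3 \<and> par t2 t3"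
proof (induction arbitrary: t1 rule: rtranclp_induct)
  case base then show ?case by auto
next
  case (step y z)
  obtain t3 where t3: "par\<^sup>*\<^sup>* t1 t3" "par y t3" using step by blast
  have "lc y" using step.hyps(1) step.prems(2)
    by (induction rule: rtranclp_induct) (auto intro: par_lc)
  then obtain t4 where "par z t4" "par t3 t4" using par_diamond step.hyps(2) t3(2) by blast
  then show ?case using t3 by (meson rtranclp.rtrancl_into_rtrancl)
qed

lemma pars_lc: "par\<^sup>*\<^sup>* t t' \<Longrightarrow> lc t \<Longrightarrow> lc t'"
  by (induction rule: rtranclp_induct) (auto intro: par_lc)

lemma pars_confl: "par\<^sup>*\<^sup>* t t1 \<Longrightarrow> par\<^sup>*\<^sup>* t t2 \<Longrightarrow> lc t \<Longrightarrow> \<exists>t3. par\<^sup>*\<^sup>* t1 t3 \<and> par\<^sup>*\<^sup>* t2 t3"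
proof (induction arbitrary: t2 rule: rtranclp_induct)
  case base then show ?case by auto
next
  case (step y z)
  obtain t3 where t3: "par\<^sup>*\<^sup>* y t3" "par\<^sup>*\<^sup>* t2 t3" using step by blast
  have "lc y" using step pars_lc by blast
  then obtain t4 where "par\<^sup>*\<^sup>* z t4" "par t3 t4" using par_strip t3(1) step.hyps(2) by blast
  then show ?case using t3 by (meson rtranclp.rtrancl_into_rtrancl)
qed

lemma reds_pars: "reds t t' \<Longrightarrow> par\<^sup>*\<^sup>* t t'"
  by (induction rule: rtranclp_induct) (auto intro: red_par rtranclp.rtrancl_into_rtrancl)

lemma pars_reds: "par\<^sup>*\<^sup>* t t' \<Longrightarrow> lc t \<Longrightarrow> reds t t'"
  by (induction rule: rtranclp_induct) (auto intro: par_reds rtranclp_trans dest: pars_lc)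

theorem CR: "reds t t1 \<Longrightarrow> reds t t2 \<Longrightarrow> lc t \<Longrightarrow> \<exists>t3. reds t1 t3 \<and> reds t2 t3"
proof -
  assume h: "reds t t1" "reds t t2" "lc t"
  obtain t3 where "par\<^sup>*\<^sup>* t1 t3" "par\<^sup>*\<^sup>* t2 t3" using pars_confl reds_pars h by blast
  moreover have "lc t1" "lc t2" using h reds_lc by auto
  ultimately show ?thesis using pars_reds by blast
qed

lemma reds_opn_arg: "reds N N' \<Longrightarrow> lc N \<Longrightarrow> lc_at (Suc 0) B \<Longrightarrow> reds (opn B N) (opn B N')"
proof -
  assume h: "reds N N'" "lc N" and lB: "lc_at (Suc 0) B"
  have "par\<^sup>*\<^sup>* N N'" using h reds_pars by blast
  then have "par\<^sup>*\<^sup>* (opn B N) (opn B N')" using h(2)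
  proof (induction rule: rtranclp_induct)
    case (step y z)
    have ly: "lc y" using step pars_lc by blast
    have lz: "lc z" using ly step par_lc by blast
    have "par (opn B y) (opn B z)" by (rule par_open[of "{}"]) (use step ly lz in \<open>auto intro: par_refl\<close>)
    then show ?case using step by (meson rtranclp.rtrancl_into_rtrancl)
  qed auto
  then show ?thesis using pars_reds lB h(2) lc_opn by blast
qed

definition conv :: "trm \<Rightarrow> trm \<Rightarrow> bool" where
  "conv A B = (\<exists>C. reds A C \<and> reds B C)"

inductive wfR :: "ctx \<Rightarrow> bool"
  and tyR :: "ctx \<Rightarrow> trm \<Rightarrow> trm \<Rightarrow> bool" where
  rwf_nil: "wfR []"
| rwf_cons: "wfR \<Gamma> \<Longrightarrow> tyR \<Gamma> A (Univ i) \<Longrightarrow> x \<notin> cdom \<Gamma> \<Longrightarrow> wfR (\<Gamma> @ [(x, A)])"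
| r_var: "wfR \<Gamma> \<Longrightarrow> (x, A) \<in> set \<Gamma> \<Longrightarrow> tyR \<Gamma> (FVar x) A"
| r_univ: "wfR \<Gamma> \<Longrightarrow> tyR \<Gamma> (Univ i) (Univ (Suc i))"
| r_pi: "tyR \<Gamma> A (Univ i) \<Longrightarrow> finite S \<Longrightarrow>
         (\<And>x. x \<notin> S \<Longrightarrow> tyR (\<Gamma> @ [(x, A)]) (opn B (FVar x)) (Univ j)) \<Longrightarrow>
         tyR \<Gamma> (Pi A B) (Univ (max i j))"
| r_app: "tyR \<Gamma> M (Pi A B) \<Longrightarrow> tyR \<Gamma> N A \<Longrightarrow> tyR \<Gamma> (App M N) (opn B N)"
| r_lam: "tyR \<Gamma> A (Univ i) \<Longrightarrow> finite S \<Longrightarrow>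
         (\<And>x. x \<notin> S \<Longrightarrow> tyR (\<Gamma> @ [(x, A)]) (opn M (FVar x)) (opn B (FVar x))) \<Longrightarrow>
         tyR \<Gamma> (Lam A M) (Pi A B)"
| r_conv: "tyR \<Gamma> M A \<Longrightarrow> tyR \<Gamma> B (Univ i) \<Longrightarrow> conv A B \<Longrightarrow> tyR \<Gamma> M B"

lemmas tyR_induct = wfR_tyR.inducts(2)[where ?P1.0="\<lambda>_. True", consumes 1, case_names rwf_nil rwf_cons r_var r_univ r_pi r_app r_lam r_conv]

lemma finite_cdom: "finite (cdom \<Gamma>)" by (simp add: cdom_def)
lemma cdom_snoc[simp]: "cdom (\<Gamma> @ [(x, A)]) = insert x (cdom \<Gamma>)" by (auto simp: cdom_def)
lemma cdom_append[simp]: "cdom (\<Gamma> @ \<Delta>) = cdom \<Gamma> \<union> cdom \<Delta>" by (auto simp: cdom_def)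
lemma cdom_Cons[simp]: "cdom ((x, A) # \<Gamma>) = insert x (cdom \<Gamma>)" by (auto simp: cdom_def)
lemma cdom_Nil[simp]: "cdom [] = {}" by (auto simp: cdom_def)
lemma in_cdom: "(x, A) \<in> set \<Gamma> \<Longrightarrow> x \<in> cdom \<Gamma>" by (force simp: cdom_def)

lemma fresh_for: "finite S \<Longrightarrow> \<exists>x. x \<notin> S \<union> fv B \<union> fv M \<union> cdom \<Gamma>"
  using fresh_ex[of "S \<union> fv B \<union> fv M \<union> cdom \<Gamma>"] finite_fv finite_cdom by auto

lemma tyR_wf: "tyR \<Gamma> M A \<Longrightarrow> wfR \<Gamma>"
  by (induction rule: tyR_induct) (auto intro: wfR_tyR.intros)

lemma wf_tyR_props:
  "(wfR \<Gamma> \<longrightarrow> distinct (map fst \<Gamma>) \<and> (\<forall>x A. (x, A) \<in> set \<Gamma> \<longrightarrow> lc A \<and> fv A \<subseteq> cdom \<Gamma>)) \<and>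
   (tyR \<Gamma>' M T \<longrightarrow> lc M \<and> lc T \<and> fv M \<subseteq> cdom \<Gamma>' \<and> fv T \<subseteq> cdom \<Gamma>')"
proof (induction rule: wfR_tyR.induct)
  case rwf_nil then show ?case by simp
next
  case (rwf_cons \<Gamma> A i x)
  then show ?case by (auto simp: cdom_def)
next
  case (r_var \<Gamma> x A) then show ?case by (auto dest: in_cdom)
next
  case (r_univ \<Gamma> i) then show ?case by simp
next
  case (r_pi \<Gamma> A i S B j)
  obtain x where x: "x \<notin> S \<union> fv B \<union> fv B \<union> cdom \<Gamma>" using fresh_for r_pi.hyps(2) by blast
  have h: "lc (opn B (FVar x))" "fv (opn B (FVar x)) \<subseteq> insert x (cdom \<Gamma>)" using r_pi.IH(2)[of x] x by auto
  have "lc_at (Suc 0) B" using h lc_opn_inv by blast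
  moreover have "fv B \<subseteq> cdom \<Gamma>" using h(2) fv_opn_sup[of B "FVar x"] x by auto
  ultimately show ?case using r_pi.IH(1) by simp
next
  case (r_app \<Gamma> M A B N)
  have "lc (opn B N)" using r_app.IH by (simp add: lc_opn)
  moreover have "fv (opn B N) \<subseteq> cdom \<Gamma>" using r_app.IH fv_opn_sub[of B N] by auto
  ultimately show ?case using r_app.IH by auto
next
  case (r_lam \<Gamma> A i S M B)
  obtain x where x: "x \<notin> S \<union> fv B \<union> fv M \<union> cdom \<Gamma>" using fresh_for r_lam.hyps(2) by blast
  have h: "lc (opn M (FVar x))" "fv (opn M (FVar x)) \<subseteq> insert x (cdom \<Gamma>)"
     "lc (opn B (FVar x))" "fv (opn B (FVar x)) \<subseteq> insert x (cdom \<Gamma>)" using r_lam.IH(2)[of x] x by auto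
  have "lc_at (Suc 0) B" "lc_at (Suc 0) M" using h lc_opn_inv by blast+
  moreover have "fv B \<subseteq> cdom \<Gamma>" using h(4) fv_opn_sup[of B "FVar x"] x by auto
  moreover have "fv M \<subseteq> cdom \<Gamma>" using h(2) fv_opn_sup[of M "FVar x"] x by auto
  ultimately show ?case using r_lam.IH(1) by simp
next
  case (r_conv \<Gamma> M A B i) then show ?case by auto
qed

lemma wfR_distinct: "wfR \<Gamma> \<Longrightarrow> distinct (map fst \<Gamma>)" using wf_tyR_props by blast
lemma wfR_entry: "wfR \<Gamma> \<Longrightarrow> (x, A) \<in> set \<Gamma> \<Longrightarrow> lc A \<and> fv A \<subseteq> cdom \<Gamma>" using wf_tyR_props by blast
lemma tyR_lc: "tyR \<Gamma> M T \<Longrightarrow> lc M \<and> lc T" using wf_tyR_props by blast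
lemma tyR_fv: "tyR \<Gamma> M T \<Longrightarrow> fv M \<subseteq> cdom \<Gamma> \<and> fv T \<subseteq> cdom \<Gamma>" using wf_tyR_props by blast

lemma distinct_entry_eq: "distinct (map fst \<Gamma>) \<Longrightarrow> (x, A) \<in> set \<Gamma> \<Longrightarrow> (x, B) \<in> set \<Gamma> \<Longrightarrow> A = B"
  by (metis eq_key_imp_eq_value)

lemma wfR_snoc_inv: "wfR (\<Gamma> @ [(x, A)]) \<Longrightarrow> wfR \<Gamma> \<and> (\<exists>i. tyR \<Gamma> A (Univ i)) \<and> x \<notin> cdom \<Gamma>"
  by (erule wfR.cases) auto

lemma wfR_prefix: "wfR (\<Gamma> @ \<Delta>) \<Longrightarrow> wfR \<Gamma>"
proof (induction \<Delta> rule: rev_induct)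
  case (snoc p \<Delta>) then show ?case by (cases p) (metis append.assoc wfR_snoc_inv)
qed simp

lemma weaken: "tyR \<Gamma> M A \<Longrightarrow> wfR \<Delta> \<Longrightarrow> set \<Gamma> \<subseteq> set \<Delta> \<Longrightarrow> tyR \<Delta> M A"
proof (induction arbitrary: \<Delta> rule: tyR_induct)
  case (r_var \<Gamma> x A) then show ?case by (auto intro: wfR_tyR.r_var)
next
  case (r_univ \<Gamma> i) then show ?case by (auto intro: wfR_tyR.r_univ)
next
  case (r_pi \<Gamma> A i S B j)
  have A: "tyR \<Delta> A (Univ i)" using r_pi by blast
  show ?case
  proof (rule wfR_tyR.r_pi[OF A, of "S \<union> cdom \<Delta>"])
    show "finite (S \<union> cdom \<Delta>)" using r_pi finite_cdom by auto
    fix x assume x: "x \<notin> S \<union> cdom \<Delta>"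
    have "wfR (\<Delta> @ [(x, A)])" using A x r_pi.prems by (auto intro: rwf_cons)
    then show "tyR (\<Delta> @ [(x, A)]) (opn B (FVar x)) (Univ j)" using r_pi.IH(2)[of x "\<Delta> @ [(x, A)]"] x r_pi.prems by auto
  qed
next
  case (r_app \<Gamma> M A B N) then show ?case by (auto intro: wfR_tyR.r_app)
next
  case (r_lam \<Gamma> A i S M B)
  have A: "tyR \<Delta> A (Univ i)" using r_lam by blast
  show ?case
  proof (rule wfR_tyR.r_lam[OF A, of "S \<union> cdom \<Delta>"])
    show "finite (S \<union> cdom \<Delta>)" using r_lam finite_cdom by auto
    fix x assume x: "x \<notin> S \<union> cdom \<Delta>"
    have "wfR (\<Delta> @ [(x, A)])" using A x r_lam.prems by (auto intro: rwf_cons)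
    then show "tyR (\<Delta> @ [(x, A)]) (opn M (FVar x)) (opn B (FVar x))" using r_lam.IH(2)[of x "\<Delta> @ [(x, A)]"] x r_lam.prems by auto
  qed
next
  case (r_conv \<Gamma> M A B i) then show ?case by (meson wfR_tyR.r_conv)
qed auto


lemma conv_refl[simp]: "conv A A" by (auto simp: conv_def)
lemma conv_sym: "conv A B \<Longrightarrow> conv B A" by (auto simp: conv_def)
lemma conv_trans: "conv A B \<Longrightarrow> conv B C \<Longrightarrow> lc B \<Longrightarrow> conv A C"
proof -
  assume "conv A B" "conv B C" "lc B"
  then obtain X Y where h: "reds A X" "reds B X" "reds B Y" "reds C Y" by (auto simp: conv_def)
  then obtain Z where "reds X Z" "reds Y Z" using CR \<open>lc B\<close> by blast
  then show ?thesis using h unfolding conv_def by (meson rtranclp_trans)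
qed
lemma reds_conv: "reds A B \<Longrightarrow> conv A B" by (auto simp: conv_def)
lemma reds_conv': "reds A B \<Longrightarrow> conv B A" by (auto simp: conv_def)
lemma conv_subst: "conv A B \<Longrightarrow> lc u \<Longrightarrow> conv (subst x u A) (subst x u B)"
  unfolding conv_def using reds_subst by blast

lemma conv_Pi_inj: "conv (Pi A B) (Pi A' B') \<Longrightarrow>
   conv A A' \<and> (\<exists>S. finite S \<and> (\<forall>x. x \<notin> S \<longrightarrow> conv (opn B (FVar x)) (opn B' (FVar x))))"
proof -
  assume "conv (Pi A B) (Pi A' B')"
  then obtain C where c: "reds (Pi A B) C" "reds (Pi A' B') C" by (auto simp: conv_def)
  obtain A1 B1 S1 where 1: "C = Pi A1 B1" "reds A A1" "finite S1" "\<forall>x. x \<notin> S1 \<longrightarrow> reds (opn B (FVar x)) (opn B1 (FVar x))"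
    using reds_Pi_inv[OF c(1)] by blast
  obtain A2 B2 S2 where 2: "C = Pi A2 B2" "reds A' A2" "finite S2" "\<forall>x. x \<notin> S2 \<longrightarrow> reds (opn B' (FVar x)) (opn B2 (FVar x))"
    using reds_Pi_inv[OF c(2)] by blast
  show ?thesis using 1 2 by (auto simp: conv_def intro!: exI[of _ "S1 \<union> S2"])
qed

lemma conv_Pi_Univ: "\<not> conv (Pi A B) (Univ i)"
  by (auto simp: conv_def dest!: reds_Univ reds_Pi_inv)
lemma conv_Univ_Pi: "\<not> conv (Univ i) (Pi A B)"
  by (auto simp: conv_def dest!: reds_Univ reds_Pi_inv)
lemma conv_Univ_Univ: "conv (Univ i) (Univ j) \<Longrightarrow> i = j"
  by (auto simp: conv_def dest!: reds_Univ)

lemma conv_opn_body: "finite S \<Longrightarrow> (\<And>x. x \<notin> S \<Longrightarrow> conv (opn B (FVar x)) (opn B' (FVar x))) \<Longrightarrow> lc N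
  \<Longrightarrow> conv (opn B N) (opn B' N)"
proof -
  assume S: "finite S" and h: "\<And>x. x \<notin> S \<Longrightarrow> conv (opn B (FVar x)) (opn B' (FVar x))" and l: "lc N"
  obtain x where x: "x \<notin> S \<union> fv B \<union> fv B'" using S fresh_ex[of "S \<union> fv B \<union> fv B'"] finite_fv by auto
  have "conv (subst x N (opn B (FVar x))) (subst x N (opn B' (FVar x)))"
    using x h l by (intro conv_subst) auto
  then show ?thesis using x by (metis UnCI subst_intro)
qed

lemma var_type: "wfR \<Gamma> \<Longrightarrow> (x, A) \<in> set \<Gamma> \<Longrightarrow> \<exists>i. tyR \<Gamma> A (Univ i)"
proof (induction \<Gamma> rule: rev_induct)
  case Nil then show ?case by simp
next
  case (snoc p \<Gamma>)
  obtain y B where p: "p = (y, B)" by (cases p)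
  have w: "wfR \<Gamma>" "\<exists>i. tyR \<Gamma> B (Univ i)" using snoc.prems wfR_snoc_inv p by auto
  have "\<exists>i. tyR \<Gamma> A (Univ i)"
  proof (cases "(x, A) = (y, B)")
    case True then show ?thesis using w by auto
  next
    case False then have "(x, A) \<in> set \<Gamma>" using snoc.prems p by auto
    then show ?thesis using snoc.IH w by blast
  qed
  then obtain i where "tyR \<Gamma> A (Univ i)" by blast
  then have "tyR (\<Gamma> @ [p]) A (Univ i)" by (rule weaken) (use snoc.prems in auto)
  then show ?case by blast
qed

definition substc :: "name \<Rightarrow> trm \<Rightarrow> ctx \<Rightarrow> ctx" where
  "substc x N \<Theta> = map (\<lambda>(y, T). (y, subst x N T)) \<Theta>"

lemma substc_Nil[simp]: "substc x N [] = []" by (simp add: substc_def)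
lemma substc_snoc[simp]: "substc x N (\<Theta> @ [(y, A)]) = substc x N \<Theta> @ [(y, subst x N A)]" by (simp add: substc_def)
lemma cdom_substc[simp]: "cdom (substc x N \<Theta>) = cdom \<Theta>" by (force simp: substc_def cdom_def)
lemma in_substc: "(y, A) \<in> set \<Theta> \<Longrightarrow> (y, subst x N A) \<in> set (substc x N \<Theta>)" by (force simp: substc_def)

lemma subst_lemma:
 "(wfR \<Gamma>' \<longrightarrow> (\<forall>\<Gamma> x C \<Theta> N. \<Gamma>' = \<Gamma> @ [(x, C)] @ \<Theta> \<longrightarrow> tyR \<Gamma> N C \<longrightarrow> wfR (\<Gamma> @ substc x N \<Theta>))) \<and>
  (tyR \<Gamma>' M T \<longrightarrow> (\<forall>\<Gamma> x C \<Theta> N. \<Gamma>' = \<Gamma> @ [(x, C)] @ \<Theta> \<longrightarrow> tyR \<Gamma> N C \<longrightarrow>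
      tyR (\<Gamma> @ substc x N \<Theta>) (subst x N M) (subst x N T)))"
proof (induction rule: wfR_tyR.induct)
  case rwf_nil then show ?case by simp
next
  case (rwf_cons \<Gamma>0 A i y)
  show ?case
  proof (intro allI impI)
    fix \<Gamma> x C \<Theta> N assume e: "\<Gamma>0 @ [(y, A)] = \<Gamma> @ [(x, C)] @ \<Theta>" and N: "tyR \<Gamma> N C"
    show "wfR (\<Gamma> @ substc x N \<Theta>)"
    proof (cases \<Theta> rule: rev_exhaust)
      case Nil then show ?thesis using N tyR_wf by simp
    next
      case (snoc \<Theta>0 q)
      then have q: "q = (y, A)" and g: "\<Gamma>0 = \<Gamma> @ [(x, C)] @ \<Theta>0" using e by auto
      have "wfR (\<Gamma> @ substc x N \<Theta>0)" using rwf_cons.IH(1)[rule_format, OF g N] .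
      moreover have "tyR (\<Gamma> @ substc x N \<Theta>0) (subst x N A) (Univ i)" using rwf_cons.IH(2)[rule_format, OF g N] by simp
      moreover have "y \<notin> cdom (\<Gamma> @ substc x N \<Theta>0)" using rwf_cons.hyps(3) g by simp
      ultimately have "wfR ((\<Gamma> @ substc x N \<Theta>0) @ [(y, subst x N A)])" by (rule wfR_tyR.rwf_cons)
      then show ?thesis using snoc q by simp
    qed
  qed
next
  case (r_var \<Gamma>' y A)
  show ?case
  proof (intro allI impI)
    fix \<Gamma> x C \<Theta> N assume e: "\<Gamma>' = \<Gamma> @ [(x, C)] @ \<Theta>" and N: "tyR \<Gamma> N C"
    have w: "wfR (\<Gamma> @ substc x N \<Theta>)" using r_var.IH[rule_format, OF e N] .
    have d: "distinct (map fst \<Gamma>')" using r_var.hyps wfR_distinct by blast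
    have wx: "wfR (\<Gamma> @ [(x, C)])" using wfR_prefix[of "\<Gamma> @ [(x, C)]" \<Theta>] r_var.hyps(1) e by simp
    then have xG: "x \<notin> cdom \<Gamma>" and wG: "wfR \<Gamma>" using wfR_snoc_inv by auto
    obtain i where "tyR \<Gamma> C (Univ i)" using wx wfR_snoc_inv by blast
    then have xC: "x \<notin> fv C" using tyR_fv xG by blast
    show "tyR (\<Gamma> @ substc x N \<Theta>) (subst x N (FVar y)) (subst x N A)"
    proof (cases "y = x")
      case True
      have "(x, C) \<in> set \<Gamma>'" using e by simp
      then have "A = C" using distinct_entry_eq[OF d] r_var.hyps(2) True by blast
      moreover have "tyR (\<Gamma> @ substc x N \<Theta>) N C" by (rule weaken[OF N w]) auto
      ultimately show ?thesis using True xC by (simp add: subst_fresh)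
    next
      case False
      have "(y, A) \<in> set \<Gamma> \<or> (y, A) \<in> set \<Theta>" using False r_var.hyps(2) e by auto
      then show ?thesis
      proof
        assume yG: "(y, A) \<in> set \<Gamma>"
        then have "x \<notin> fv A" using wfR_entry[OF wG yG] xG by blast
        then show ?thesis using False yG w by (auto simp: subst_fresh intro: wfR_tyR.r_var)
      next
        assume "(y, A) \<in> set \<Theta>"
        then show ?thesis using False w in_substc by (auto intro: wfR_tyR.r_var)
      qed
    qed
  qed
next
  case (r_univ \<Gamma>' i) then show ?case by (auto intro: wfR_tyR.r_univ)
next
  case (r_pi \<Gamma>' A i S B j)
  show ?case
  proof (intro allI impI)
    fix \<Gamma> x C \<Theta> N assume e: "\<Gamma>' = \<Gamma> @ [(x, C)] @ \<Theta>" and N: "tyR \<Gamma> N C"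
    have lN: "lc N" using N tyR_lc by blast
    have A: "tyR (\<Gamma> @ substc x N \<Theta>) (subst x N A) (Univ i)" using r_pi.IH(1)[rule_format, OF e N] by simp
    have "tyR (\<Gamma> @ substc x N \<Theta>) (Pi (subst x N A) (subst x N B)) (Univ (max i j))"
    proof (rule wfR_tyR.r_pi[OF A, of "S \<union> {x}"])
      show "finite (S \<union> {x})" using r_pi by simp
      fix y assume y: "y \<notin> S \<union> {x}"
      have "tyR ((\<Gamma> @ substc x N \<Theta>) @ [(y, subst x N A)]) (subst x N (opn B (FVar y))) (subst x N (Univ j))"
        using r_pi.IH(2)[of y, rule_format, OF _ _ N] y e by simp
      then show "tyR ((\<Gamma> @ substc x N \<Theta>) @ [(y, subst x N A)]) (opn (subst x N B) (FVar y)) (Univ j)"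
        using y lN by (simp add: subst_opn_var)
    qed
    then show "tyR (\<Gamma> @ substc x N \<Theta>) (subst x N (Pi A B)) (subst x N (Univ (max i j)))" by simp
  qed
next
  case (r_app \<Gamma>' M A B N')
  show ?case
  proof (intro allI impI)
    fix \<Gamma> x C \<Theta> N assume e: "\<Gamma>' = \<Gamma> @ [(x, C)] @ \<Theta>" and N: "tyR \<Gamma> N C"
    have lN: "lc N" using N tyR_lc by blast
    have "tyR (\<Gamma> @ substc x N \<Theta>) (subst x N M) (Pi (subst x N A) (subst x N B))"
      using r_app.IH(1)[rule_format, OF e N] by simp
    moreover have "tyR (\<Gamma> @ substc x N \<Theta>) (subst x N N') (subst x N A)"
      using r_app.IH(2)[rule_format, OF e N] by simp
    ultimately have "tyR (\<Gamma> @ substc x N \<Theta>) (App (subst x N M) (subst x N N')) (opn (subst x N B) (subst x N N'))"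
      by (rule wfR_tyR.r_app)
    then show "tyR (\<Gamma> @ substc x N \<Theta>) (subst x N (App M N')) (subst x N (opn B N'))"
      using lN by (simp add: subst_opn)
  qed
next
  case (r_lam \<Gamma>' A i S M B)
  show ?case
  proof (intro allI impI)
    fix \<Gamma> x C \<Theta> N assume e: "\<Gamma>' = \<Gamma> @ [(x, C)] @ \<Theta>" and N: "tyR \<Gamma> N C"
    have lN: "lc N" using N tyR_lc by blast
    have A: "tyR (\<Gamma> @ substc x N \<Theta>) (subst x N A) (Univ i)" using r_lam.IH(1)[rule_format, OF e N] by simp
    have "tyR (\<Gamma> @ substc x N \<Theta>) (Lam (subst x N A) (subst x N M)) (Pi (subst x N A) (subst x N B))"
    proof (rule wfR_tyR.r_lam[OF A, of "S \<union> {x}"])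
      show "finite (S \<union> {x})" using r_lam by simp
      fix y assume y: "y \<notin> S \<union> {x}"
      have "tyR ((\<Gamma> @ substc x N \<Theta>) @ [(y, subst x N A)]) (subst x N (opn M (FVar y))) (subst x N (opn B (FVar y)))"
        using r_lam.IH(2)[of y, rule_format, OF _ _ N] y e by simp
      then show "tyR ((\<Gamma> @ substc x N \<Theta>) @ [(y, subst x N A)]) (opn (subst x N M) (FVar y)) (opn (subst x N B) (FVar y))"
        using y lN by (simp add: subst_opn_var)
    qed
    then show "tyR (\<Gamma> @ substc x N \<Theta>) (subst x N (Lam A M)) (subst x N (Pi A B))" by simp
  qed
next
  case (r_conv \<Gamma>' M A B i)
  show ?case
  proof (intro allI impI)
    fix \<Gamma> x C \<Theta> N assume e: "\<Gamma>' = \<Gamma> @ [(x, C)] @ \<Theta>" and N: "tyR \<Gamma> N C"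
    have lN: "lc N" using N tyR_lc by blast
    have "tyR (\<Gamma> @ substc x N \<Theta>) (subst x N M) (subst x N A)" using r_conv.IH(1)[rule_format, OF e N] .
    moreover have "tyR (\<Gamma> @ substc x N \<Theta>) (subst x N B) (Univ i)" using r_conv.IH(2)[rule_format, OF e N] by simp
    moreover have "conv (subst x N A) (subst x N B)" using r_conv.hyps(3) lN conv_subst by blast
    ultimately show "tyR (\<Gamma> @ substc x N \<Theta>) (subst x N M) (subst x N B)" by (rule wfR_tyR.r_conv)
  qed
qed

lemma subst1: "tyR (\<Gamma> @ [(x, C)]) M T \<Longrightarrow> tyR \<Gamma> N C \<Longrightarrow> tyR \<Gamma> (subst x N M) (subst x N T)"
proof -
  assume h: "tyR (\<Gamma> @ [(x, C)]) M T" "tyR \<Gamma> N C"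
  have "\<forall>\<Gamma>0 x0 C0 \<Theta> N0. \<Gamma> @ [(x, C)] = \<Gamma>0 @ [(x0, C0)] @ \<Theta> \<longrightarrow> tyR \<Gamma>0 N0 C0 \<longrightarrow>
      tyR (\<Gamma>0 @ substc x0 N0 \<Theta>) (subst x0 N0 M) (subst x0 N0 T)"
    using subst_lemma[of "\<Gamma> @ [(x, C)]" M T] h(1) by blast
  from this[rule_format, of \<Gamma> x C "[]" N] h(2) show ?thesis by simp
qed

lemma subst_opn_typ: "tyR (\<Gamma> @ [(x, C)]) (opn M (FVar x)) (opn T (FVar x)) \<Longrightarrow> x \<notin> fv M \<Longrightarrow> x \<notin> fv T
  \<Longrightarrow> tyR \<Gamma> N C \<Longrightarrow> tyR \<Gamma> (opn M N) (opn T N)"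
  by (metis subst1 subst_intro)

lemma rename_typ: "tyR (\<Gamma> @ [(x, A)]) t T \<Longrightarrow> y \<notin> cdom \<Gamma> \<Longrightarrow> y \<noteq> x
  \<Longrightarrow> tyR (\<Gamma> @ [(y, A)]) (subst x (FVar y) t) (subst x (FVar y) T)"
proof -
  assume h: "tyR (\<Gamma> @ [(x, A)]) t T" "y \<notin> cdom \<Gamma>" "y \<noteq> x"
  have w: "wfR (\<Gamma> @ [(x, A)])" using h tyR_wf by blast
  then obtain i where wG: "wfR \<Gamma>" and A: "tyR \<Gamma> A (Univ i)" and xG: "x \<notin> cdom \<Gamma>" using wfR_snoc_inv by blast
  have wy: "wfR (\<Gamma> @ [(y, A)])" using wG A h(2) by (rule rwf_cons)
  have Ay: "tyR (\<Gamma> @ [(y, A)]) A (Univ i)" using weaken[OF A wy] by auto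
  have wyx: "wfR ((\<Gamma> @ [(y, A)]) @ [(x, A)])" by (rule rwf_cons[OF wy Ay]) (use xG h(3) in auto)
  have t: "tyR ((\<Gamma> @ [(y, A)]) @ [(x, A)]) t T" using weaken[OF h(1) wyx] by auto
  have "tyR (\<Gamma> @ [(y, A)]) (FVar y) A" using wy by (auto intro: wfR_tyR.r_var)
  then show ?thesis using subst1[OF t] by blast
qed

lemma rename_opn: "tyR (\<Gamma> @ [(x, A)]) (opn M (FVar x)) (opn T (FVar x)) \<Longrightarrow> x \<notin> fv M \<Longrightarrow> x \<notin> fv T
  \<Longrightarrow> y \<notin> cdom \<Gamma> \<Longrightarrow> tyR (\<Gamma> @ [(y, A)]) (opn M (FVar y)) (opn T (FVar y))"
  by (cases "y = x") (auto dest: rename_typ simp: subst_var_rename)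

lemma opn_Univ_simp[simp]: "opn (Univ j) u = Univ j" by (simp add: opn_def)

lemma rename_opn_univ: "tyR (\<Gamma> @ [(x, A)]) (opn M (FVar x)) (Univ j) \<Longrightarrow> x \<notin> fv M
  \<Longrightarrow> y \<notin> cdom \<Gamma> \<Longrightarrow> tyR (\<Gamma> @ [(y, A)]) (opn M (FVar y)) (Univ j)"
  using rename_opn[of \<Gamma> x A M "Univ j" y] by simp

lemma ctx_conv:
 "(wfR \<Gamma>' \<longrightarrow> (\<forall>G z D D' Th k. \<Gamma>' = G @ [(z, D)] @ Th \<longrightarrow> tyR G D' (Univ k) \<longrightarrow> conv D' D \<longrightarrow> wfR (G @ [(z, D')] @ Th))) \<and>
  (tyR \<Gamma>' M T \<longrightarrow> (\<forall>G z D D' Th k. \<Gamma>' = G @ [(z, D)] @ Th \<longrightarrow> tyR G D' (Univ k) \<longrightarrow> conv D' D \<longrightarrow> tyR (G @ [(z, D')] @ Th) M T))"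
proof (induction rule: wfR_tyR.induct)
  case rwf_nil then show ?case by simp
next
  case (rwf_cons \<Gamma>0 B k0 y)
  show ?case
  proof (intro allI impI)
    fix G z D D' Th k assume e: "\<Gamma>0 @ [(y, B)] = G @ [(z, D)] @ Th" and D': "tyR G D' (Univ k)" and cv: "conv D' D"
    show "wfR (G @ [(z, D')] @ Th)"
    proof (cases Th rule: rev_exhaust)
      case Nil
      then have "\<Gamma>0 = G" "y = z" using e by auto
      then have "wfR (G @ [(z, D')])" using rwf_cons.hyps(3) D' tyR_wf by (intro wfR_tyR.rwf_cons) auto
      then show ?thesis using Nil by simp
    next
      case (snoc Th0 q)
      then have q: "q = (y, B)" and g: "\<Gamma>0 = G @ [(z, D)] @ Th0" using e by auto
      have "wfR (G @ [(z, D')] @ Th0)" using rwf_cons.IH(1)[rule_format, OF g D' cv] .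
      moreover have "tyR (G @ [(z, D')] @ Th0) B (Univ k0)" using rwf_cons.IH(2)[rule_format, OF g D' cv] .
      moreover have "y \<notin> cdom (G @ [(z, D')] @ Th0)" using rwf_cons.hyps(3) g by simp
      ultimately have "wfR ((G @ [(z, D')] @ Th0) @ [(y, B)])" by (rule wfR_tyR.rwf_cons)
      then show ?thesis using snoc q by simp
    qed
  qed
next
  case (r_var \<Gamma>' y B)
  show ?case
  proof (intro allI impI)
    fix G z D D' Th k assume e: "\<Gamma>' = G @ [(z, D)] @ Th" and D': "tyR G D' (Univ k)" and cv: "conv D' D"
    have w: "wfR (G @ [(z, D')] @ Th)" using r_var.IH[rule_format, OF e D' cv] .
    show "tyR (G @ [(z, D')] @ Th) (FVar y) B"
    proof (cases "y = z")
      case True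
      have d: "distinct (map fst \<Gamma>')" using r_var.hyps wfR_distinct by blast
      have "(z, D) \<in> set \<Gamma>'" using e by simp
      then have BD: "B = D" using distinct_entry_eq[OF d] r_var.hyps(2) True by blast
      have wx: "wfR (G @ [(z, D)])" using wfR_prefix[of "G @ [(z, D)]" Th] r_var.hyps(1) e by simp
      then obtain j where "tyR G D (Univ j)" using wfR_snoc_inv by blast
      then have Dt: "tyR (G @ [(z, D')] @ Th) D (Univ j)" by (rule weaken[OF _ w]) auto
      have "tyR (G @ [(z, D')] @ Th) (FVar z) D'" using w by (auto intro: wfR_tyR.r_var)
      then show ?thesis using Dt cv BD True by (auto intro: wfR_tyR.r_conv)
    next
      case False
      then have "(y, B) \<in> set (G @ [(z, D')] @ Th)" using r_var.hyps(2) e by auto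
      then show ?thesis by (rule wfR_tyR.r_var[OF w])
    qed
  qed
next
  case (r_univ \<Gamma>' i)
  show ?case
  proof (intro allI impI)
    fix G z D D' Th k assume e: "\<Gamma>' = G @ [(z, D)] @ Th" and D': "tyR G D' (Univ k)" and cv: "conv D' D"
    show "tyR (G @ [(z, D')] @ Th) (Univ i) (Univ (Suc i))"
      using r_univ.IH[rule_format, OF e D' cv] by (rule wfR_tyR.r_univ)
  qed
next
  case (r_pi \<Gamma>' A i S B j)
  show ?case
  proof (intro allI impI)
    fix G z D D' Th k assume e: "\<Gamma>' = G @ [(z, D)] @ Th" and D': "tyR G D' (Univ k)" and cv: "conv D' D"
    have A: "tyR (G @ [(z, D')] @ Th) A (Univ i)" using r_pi.IH(1)[rule_format, OF e D' cv] .
    show "tyR (G @ [(z, D')] @ Th) (Pi A B) (Univ (max i j))"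
    proof (rule wfR_tyR.r_pi[OF A, of S])
      show "finite S" using r_pi by simp
      fix y assume y: "y \<notin> S"
      show "tyR ((G @ [(z, D')] @ Th) @ [(y, A)]) (opn B (FVar y)) (Univ j)"
        using r_pi.IH(2)[of y, rule_format, OF _ _ D' cv] y e by simp
    qed
  qed
next
  case (r_app \<Gamma>' M A B N)
  show ?case
  proof (intro allI impI)
    fix G z D D' Th k assume e: "\<Gamma>' = G @ [(z, D)] @ Th" and D': "tyR G D' (Univ k)" and cv: "conv D' D"
    show "tyR (G @ [(z, D')] @ Th) (App M N) (opn B N)"
      using r_app.IH(1)[rule_format, OF e D' cv] r_app.IH(2)[rule_format, OF e D' cv] by (rule wfR_tyR.r_app)
  qed
next
  case (r_lam \<Gamma>' A i S M B)
  show ?case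
  proof (intro allI impI)
    fix G z D D' Th k assume e: "\<Gamma>' = G @ [(z, D)] @ Th" and D': "tyR G D' (Univ k)" and cv: "conv D' D"
    have A: "tyR (G @ [(z, D')] @ Th) A (Univ i)" using r_lam.IH(1)[rule_format, OF e D' cv] .
    show "tyR (G @ [(z, D')] @ Th) (Lam A M) (Pi A B)"
    proof (rule wfR_tyR.r_lam[OF A, of S])
      show "finite S" using r_lam by simp
      fix y assume y: "y \<notin> S"
      show "tyR ((G @ [(z, D')] @ Th) @ [(y, A)]) (opn M (FVar y)) (opn B (FVar y))"
        using r_lam.IH(2)[of y, rule_format, OF _ _ D' cv] y e by simp
    qed
  qed
next
  case (r_conv \<Gamma>' M A B i)
  show ?case
  proof (intro allI impI)
    fix G z D D' Th k assume e: "\<Gamma>' = G @ [(z, D)] @ Th" and D': "tyR G D' (Univ k)" and cv: "conv D' D"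
    show "tyR (G @ [(z, D')] @ Th) M B"
      using r_conv.IH(1)[rule_format, OF e D' cv] r_conv.IH(2)[rule_format, OF e D' cv] r_conv.hyps(3)
      by (rule wfR_tyR.r_conv)
  qed
qed

lemma ctx_conv1: "tyR (\<Gamma> @ [(x, A)]) M T \<Longrightarrow> tyR \<Gamma> A' (Univ i) \<Longrightarrow> conv A' A \<Longrightarrow> tyR (\<Gamma> @ [(x, A')]) M T"
proof -
  assume h: "tyR (\<Gamma> @ [(x, A)]) M T" "tyR \<Gamma> A' (Univ i)" "conv A' A"
  note H = mp[OF conjunct2[OF ctx_conv[of "\<Gamma> @ [(x, A)]" M T]] h(1)]
  from H[rule_format, of \<Gamma> x A "[]" A' i] h show ?thesis by simp
qed

lemma gen_pi: "tyR \<Gamma> M T \<Longrightarrow> M = Pi A B \<Longrightarrow> \<exists>i j S. tyR \<Gamma> A (Univ i) \<and> finite S \<and>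
   (\<forall>x. x \<notin> S \<longrightarrow> tyR (\<Gamma> @ [(x, A)]) (opn B (FVar x)) (Univ j)) \<and> conv (Univ (max i j)) T"
proof (induction rule: tyR_induct)
  case (r_pi \<Gamma> A' i S B' j)
  then have e: "A' = A" "B' = B" by simp_all
  show ?case
    by (rule exI[of _ i], rule exI[of _ j], rule exI[of _ S]) (use r_pi.hyps e in auto)
next
  case (r_conv \<Gamma> M A0 B0 i)
  then obtain i1 j1 S where h: "tyR \<Gamma> A (Univ i1)" "finite S"
   "\<forall>x. x \<notin> S \<longrightarrow> tyR (\<Gamma> @ [(x, A)]) (opn B (FVar x)) (Univ j1)" "conv (Univ (max i1 j1)) A0" by meson
  have "lc A0" using r_conv.hyps(1) tyR_lc by blast
  then have "conv (Univ (max i1 j1)) B0" using h(4) r_conv.hyps(3) conv_trans by blast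
  then show ?case using h by (intro exI[of _ i1] exI[of _ j1] exI[of _ S]) auto
qed auto

lemma gen_lam: "tyR \<Gamma> M T \<Longrightarrow> M = Lam C D \<Longrightarrow> \<exists>E S i. tyR \<Gamma> C (Univ i) \<and> finite S \<and>
   (\<forall>x. x \<notin> S \<longrightarrow> tyR (\<Gamma> @ [(x, C)]) (opn D (FVar x)) (opn E (FVar x))) \<and> conv (Pi C E) T"
proof (induction rule: tyR_induct)
  case (r_lam \<Gamma> A i S M B)
  then have e: "A = C" "M = D" by simp_all
  show ?case
    by (rule exI[of _ B], rule exI[of _ S], rule exI[of _ i]) (use r_lam.hyps e in auto)
next
  case (r_conv \<Gamma> M A0 B0 i)
  then obtain E S i1 where h: "tyR \<Gamma> C (Univ i1)" "finite S"
   "\<forall>x. x \<notin> S \<longrightarrow> tyR (\<Gamma> @ [(x, C)]) (opn D (FVar x)) (opn E (FVar x))" "conv (Pi C E) A0" by meson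
  have "lc A0" using r_conv.hyps(1) tyR_lc by blast
  then have "conv (Pi C E) B0" using h(4) r_conv.hyps(3) conv_trans by blast
  then show ?case using h by (intro exI[of _ E] exI[of _ S] exI[of _ i1]) auto
qed auto

lemma TC: "tyR \<Gamma> M A \<Longrightarrow> \<exists>i. tyR \<Gamma> A (Univ i)"
proof (induction rule: tyR_induct)
  case (r_var \<Gamma> x A) then show ?case using var_type by blast
next
  case (r_univ \<Gamma> i) then show ?case using wfR_tyR.r_univ by blast
next
  case (r_pi \<Gamma> A i S B j)
  then have "wfR \<Gamma>" using tyR_wf by blast
  then show ?case using wfR_tyR.r_univ by blast
next
  case (r_app \<Gamma> M A B N)
  obtain k where k: "tyR \<Gamma> (Pi A B) (Univ k)" using r_app.IH(1) by blast
  obtain i j S where h: "finite S" "\<forall>x. x \<notin> S \<longrightarrow> tyR (\<Gamma> @ [(x, A)]) (opn B (FVar x)) (Univ j)"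
    using gen_pi[OF k refl] by meson
  obtain x where x: "x \<notin> S \<union> fv B \<union> fv B \<union> cdom \<Gamma>" using fresh_for h(1) by blast
  have "tyR (\<Gamma> @ [(x, A)]) (opn B (FVar x)) (opn (Univ j) (FVar x))" using h x by simp
  then have "tyR \<Gamma> (opn B N) (opn (Univ j) N)" by (rule subst_opn_typ) (use x r_app.hyps(2) in auto)
  then show ?case by auto
next
  case (r_lam \<Gamma> A i S M B)
  obtain x where x: "x \<notin> S \<union> fv B \<union> fv B \<union> cdom \<Gamma>" using fresh_for r_lam.hyps(2) by blast
  then obtain j where j: "tyR (\<Gamma> @ [(x, A)]) (opn B (FVar x)) (Univ j)" using r_lam.IH(2) by blast
  have "tyR \<Gamma> (Pi A B) (Univ (max i j))"
  proof (rule wfR_tyR.r_pi[OF r_lam.hyps(1), of "cdom \<Gamma>"])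
    show "finite (cdom \<Gamma>)" by (rule finite_cdom)
    fix y assume "y \<notin> cdom \<Gamma>"
    then show "tyR (\<Gamma> @ [(y, A)]) (opn B (FVar y)) (Univ j)" using rename_opn_univ[OF j] x by blast
  qed
  then show ?case by blast
next
  case (r_conv \<Gamma> M A B i) then show ?case by blast
qed auto

lemma red_Pi_cases: "red (Pi A B) t \<Longrightarrow> (\<exists>A'. t = Pi A' B \<and> red A A') \<or>
   (\<exists>B' S. t = Pi A B' \<and> finite S \<and> (\<forall>x. x \<notin> S \<longrightarrow> red (opn B (FVar x)) (opn B' (FVar x))))"
  by (erule red.cases) auto

lemma red_Lam_cases: "red (Lam A B) t \<Longrightarrow> (\<exists>A'. t = Lam A' B \<and> red A A') \<or>
   (\<exists>B' S. t = Lam A B' \<and> finite S \<and> (\<forall>x. x \<notin> S \<longrightarrow> red (opn B (FVar x)) (opn B' (FVar x))))"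
  by (erule red.cases) auto

lemma red_App_cases: "red (App M N) t \<Longrightarrow> (\<exists>C D. M = Lam C D \<and> t = opn D N) \<or>
   (\<exists>M'. t = App M' N \<and> red M M') \<or> (\<exists>N'. t = App M N' \<and> red N N')"
  by (erule red.cases) auto

lemma SR1: "tyR \<Gamma> M A \<Longrightarrow> red M M' \<Longrightarrow> tyR \<Gamma> M' A"
proof (induction arbitrary: M' rule: tyR_induct)
  case (r_var \<Gamma> x A) then show ?case using red_FVar by blast
next
  case (r_univ \<Gamma> i) then show ?case using red_Univ by blast
next
  case (r_pi \<Gamma> A i S B j)
  from red_Pi_cases[OF r_pi.prems] show ?case
  proof (elim disjE exE conjE)
    fix A' assume e: "M' = Pi A' B" and r: "red A A'"
    have A': "tyR \<Gamma> A' (Univ i)" using r_pi.IH(1) r by blast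
    have cv: "conv A' A" using r by (auto intro: reds_conv')
    have "tyR \<Gamma> (Pi A' B) (Univ (max i j))"
    proof (rule wfR_tyR.r_pi[OF A', of S])
      show "finite S" by fact
      fix x assume "x \<notin> S"
      then show "tyR (\<Gamma> @ [(x, A')]) (opn B (FVar x)) (Univ j)" using ctx_conv1 r_pi.hyps(3) A' cv by blast
    qed
    then show ?thesis using e by simp
  next
    fix B' S2 assume e: "M' = Pi A B'" "finite S2" "\<forall>x. x \<notin> S2 \<longrightarrow> red (opn B (FVar x)) (opn B' (FVar x))"
    have "tyR \<Gamma> (Pi A B') (Univ (max i j))"
    proof (rule wfR_tyR.r_pi[OF r_pi.hyps(1), of "S \<union> S2"])
      show "finite (S \<union> S2)" using e r_pi.hyps by simp
      fix x assume x: "x \<notin> S \<union> S2"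
      then show "tyR (\<Gamma> @ [(x, A)]) (opn B' (FVar x)) (Univ j)" using r_pi.IH(2)[of x] e by blast
    qed
    then show ?thesis using e by simp
  qed
next
  case (r_app \<Gamma> M A B N)
  have lMB: "lc M" "lc_at (Suc 0) B" using tyR_lc[OF r_app.hyps(1)] by auto
  have lN: "lc N" using tyR_lc[OF r_app.hyps(2)] by auto
  obtain k where k: "tyR \<Gamma> (opn B N) (Univ k)" using TC[OF wfR_tyR.r_app[OF r_app.hyps]] by blast
  from red_App_cases[OF r_app.prems] show ?case
  proof (elim disjE exE conjE)
    fix C D assume e: "M = Lam C D" "M' = opn D N"
    obtain E S i where g: "tyR \<Gamma> C (Univ i)" "finite S"
      "\<forall>x. x \<notin> S \<longrightarrow> tyR (\<Gamma> @ [(x, C)]) (opn D (FVar x)) (opn E (FVar x))" "conv (Pi C E) (Pi A B)"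
      using gen_lam[OF r_app.hyps(1) e(1)] by meson
    obtain S3 where inj: "conv C A" "finite S3" "\<forall>x. x \<notin> S3 \<longrightarrow> conv (opn E (FVar x)) (opn B (FVar x))"
      using conv_Pi_inj[OF g(4)] by blast
    have NC: "tyR \<Gamma> N C" using wfR_tyR.r_conv[OF r_app.hyps(2) g(1) conv_sym[OF inj(1)]] .
    obtain x where x: "x \<notin> S \<union> fv D \<union> fv E \<union> cdom \<Gamma>" using fresh_for[OF g(2)] by blast
    have "tyR \<Gamma> (opn D N) (opn E N)" by (rule subst_opn_typ[of \<Gamma> x C]) (use g x NC in auto)
    moreover have "conv (opn E N) (opn B N)" by (rule conv_opn_body[of S3]) (use inj lN in auto)
    ultimately show ?thesis using e k wfR_tyR.r_conv by blast
  next
    fix M'' assume e: "M' = App M'' N" "red M M''"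
    have "tyR \<Gamma> M'' (Pi A B)" using r_app.IH(1)[OF e(2)] .
    then show ?thesis using r_app.hyps(2) e(1) by (auto intro: wfR_tyR.r_app)
  next
    fix N' assume e: "M' = App M N'" "red N N'"
    have N': "tyR \<Gamma> N' A" using r_app.IH(2)[OF e(2)] .
    have t: "tyR \<Gamma> (App M N') (opn B N')" using r_app.hyps(1) N' by (rule wfR_tyR.r_app)
    have "reds (opn B N) (opn B N')" using reds_opn_arg[of N N' B] e(2) lN lMB by auto
    then have "conv (opn B N') (opn B N)" by (rule reds_conv')
    then show ?thesis using t k e(1) wfR_tyR.r_conv by blast
  qed
next
  case (r_lam \<Gamma> A i S M B)
  from red_Lam_cases[OF r_lam.prems] show ?case
  proof (elim disjE exE conjE)
    fix A' assume e: "M' = Lam A' M" and r: "red A A'"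
    have A': "tyR \<Gamma> A' (Univ i)" using r_lam.IH(1) r by blast
    have cv: "conv A' A" using r by (auto intro: reds_conv')
    have t: "tyR \<Gamma> (Lam A' M) (Pi A' B)"
    proof (rule wfR_tyR.r_lam[OF A', of S])
      show "finite S" by fact
      fix x assume "x \<notin> S"
      then show "tyR (\<Gamma> @ [(x, A')]) (opn M (FVar x)) (opn B (FVar x))" using ctx_conv1 r_lam.hyps(3) A' cv by blast
    qed
    obtain k where k: "tyR \<Gamma> (Pi A B) (Univ k)"
      using TC[OF wfR_tyR.r_lam[OF r_lam.hyps(1) r_lam.hyps(2) r_lam.hyps(3)]] by blast
    have "reds (Pi A B) (Pi A' B)" using r by (auto intro: reds_pi1)
    then have "conv (Pi A' B) (Pi A B)" by (rule reds_conv')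
    then show ?thesis using t k e wfR_tyR.r_conv by blast
  next
    fix M2 S2 assume e: "M' = Lam A M2" "finite S2" "\<forall>x. x \<notin> S2 \<longrightarrow> red (opn M (FVar x)) (opn M2 (FVar x))"
    have "tyR \<Gamma> (Lam A M2) (Pi A B)"
    proof (rule wfR_tyR.r_lam[OF r_lam.hyps(1), of "S \<union> S2"])
      show "finite (S \<union> S2)" using e r_lam.hyps by simp
      fix x assume x: "x \<notin> S \<union> S2"
      then show "tyR (\<Gamma> @ [(x, A)]) (opn M2 (FVar x)) (opn B (FVar x))" using r_lam.IH(2)[of x] e by blast
    qed
    then show ?thesis using e by simp
  qed
next
  case (r_conv \<Gamma> M A B i) then show ?case using wfR_tyR.r_conv by blast
qed auto

lemma SR: "reds M M' \<Longrightarrow> tyR \<Gamma> M A \<Longrightarrow> tyR \<Gamma> M' A"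
  by (induction rule: rtranclp_induct) (auto intro: SR1)

lemma no_lam_type: "tyR \<Gamma> T (Univ i) \<Longrightarrow> reds T (Lam C D) \<Longrightarrow> False"
proof -
  assume "tyR \<Gamma> T (Univ i)" "reds T (Lam C D)"
  then have "tyR \<Gamma> (Lam C D) (Univ i)" using SR by blast
  then obtain E where "conv (Pi C E) (Univ i)" using gen_lam by blast
  then show False using conv_Pi_Univ by blast
qed

lemma typing_tyR: "(wf_ctx \<Gamma> \<longrightarrow> wfR \<Gamma>) \<and> (typing \<Gamma>' M A \<longrightarrow> tyR \<Gamma>' M A)"
proof (induction rule: wf_ctx_typing.induct)
  case (t_lam S \<Gamma> A M B)
  obtain x where "x \<notin> S" using t_lam.hyps(1) fresh_ex by blast
  then have "wfR (\<Gamma> @ [(x, A)])" using t_lam.IH tyR_wf by blast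
  then obtain i where "tyR \<Gamma> A (Univ i)" using wfR_snoc_inv by blast
  then show ?case using t_lam.hyps(1) t_lam.IH by (rule wfR_tyR.r_lam)
next
  case (t_conv \<Gamma> M A B i)
  from t_conv.hyps(3) have "conv A B"
  proof (cases rule: equiv.cases)
    case join then show ?thesis by (auto simp: conv_def)
  next
    case eta1
    then obtain C L' where r: "reds A (Lam C L')" by blast
    obtain k where "tyR \<Gamma> A (Univ k)" using TC t_conv.IH(1) by blast
    then show ?thesis using r no_lam_type by blast
  next
    case eta2
    then obtain C M' where r: "reds B (Lam C M')" by blast
    then show ?thesis using t_conv.IH(2) no_lam_type by blast
  qed
  then show ?case using t_conv.IH wfR_tyR.r_conv by blast
qed (auto intro: wfR_tyR.intros)

lemma tyR_typing: "(wfR \<Gamma> \<longrightarrow> wf_ctx \<Gamma>) \<and> (tyR \<Gamma>' M A \<longrightarrow> typing \<Gamma>' M A)"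
proof (induction rule: wfR_tyR.induct)
  case (r_lam \<Gamma> A i S M B) then show ?case by (auto intro: wf_ctx_typing.t_lam)
next
  case (r_conv \<Gamma> M A B i) then show ?case by (auto intro: wf_ctx_typing.t_conv equiv.join simp: conv_def)
qed (auto intro: wf_ctx_typing.intros)

lemma strength: "tyR \<Gamma> M A \<Longrightarrow> wfR \<Delta> \<Longrightarrow> set \<Delta> \<subseteq> set \<Gamma> \<Longrightarrow> fv M \<subseteq> cdom \<Delta>
  \<Longrightarrow> \<exists>A'. reds A A' \<and> tyR \<Delta> M A'"
proof (induction arbitrary: \<Delta> rule: tyR_induct)
  case (r_var \<Gamma> x A)
  then have "x \<in> cdom \<Delta>" by simp
  then obtain B where B: "(x, B) \<in> set \<Delta>" by (auto simp: cdom_def)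
  then have "(x, B) \<in> set \<Gamma>" using r_var.prems by auto
  then have "B = A" using distinct_entry_eq[OF wfR_distinct[OF r_var.hyps(1)]] \<open>(x, A) \<in> set \<Gamma>\<close> by blast
  then show ?case using B r_var.prems wfR_tyR.r_var by blast
next
  case (r_univ \<Gamma> i) then show ?case using wfR_tyR.r_univ by blast
next
  case (r_pi \<Gamma> A i S B j)
  have fA: "fv A \<subseteq> cdom \<Delta>" and fB: "fv B \<subseteq> cdom \<Delta>" using r_pi.prems by auto
  obtain A' where "reds (Univ i) A'" "tyR \<Delta> A A'" using r_pi.IH(1) r_pi.prems fA by blast
  then have A: "tyR \<Delta> A (Univ i)" using reds_Univ by blast
  have cD: "cdom \<Delta> \<subseteq> cdom \<Gamma>" using r_pi.prems(2) by (auto simp: cdom_def)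
  have "tyR \<Delta> (Pi A B) (Univ (max i j))"
  proof (rule wfR_tyR.r_pi[OF A, of "S \<union> cdom \<Gamma>"])
    show "finite (S \<union> cdom \<Gamma>)" using r_pi.hyps finite_cdom by simp
    fix x assume x: "x \<notin> S \<union> cdom \<Gamma>"
    have w: "wfR (\<Delta> @ [(x, A)])" using r_pi.prems(1) A x cD by (intro rwf_cons) auto
    have s: "set (\<Delta> @ [(x, A)]) \<subseteq> set (\<Gamma> @ [(x, A)])" using r_pi.prems(2) by auto
    have f: "fv (opn B (FVar x)) \<subseteq> cdom (\<Delta> @ [(x, A)])" using fv_opn_sub[of B "FVar x"] fB by auto
    obtain U where "reds (Univ j) U" "tyR (\<Delta> @ [(x, A)]) (opn B (FVar x)) U"
      using r_pi.IH(2)[of x "\<Delta> @ [(x, A)]"] x w s f by blast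
    then show "tyR (\<Delta> @ [(x, A)]) (opn B (FVar x)) (Univ j)" using reds_Univ by blast
  qed
  then show ?case by blast
next
  case (r_app \<Gamma> M A B N)
  have fM: "fv M \<subseteq> cdom \<Delta>" and fN: "fv N \<subseteq> cdom \<Delta>" using r_app.prems by auto
  have lA: "lc A" using tyR_lc[OF r_app.hyps(1)] by simp
  have lN: "lc N" using tyR_lc[OF r_app.hyps(2)] by simp
  obtain T1 where T1: "reds (Pi A B) T1" "tyR \<Delta> M T1" using r_app.IH(1) r_app.prems fM by blast
  obtain A1 B1 S1 where P: "T1 = Pi A1 B1" "reds A A1" "finite S1"
    "\<forall>x. x \<notin> S1 \<longrightarrow> reds (opn B (FVar x)) (opn B1 (FVar x))" using reds_Pi_inv[OF T1(1)] by blast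
  obtain T2 where T2: "reds A T2" "tyR \<Delta> N T2" using r_app.IH(2) r_app.prems fN by blast
  obtain A3 where A3: "reds A1 A3" "reds T2 A3" using CR[OF P(2) T2(1) lA] by blast
  obtain k where k: "tyR \<Delta> (Pi A1 B1) (Univ k)" using TC T1(2) P(1) by blast
  have "reds (Pi A1 B1) (Pi A3 B1)" using A3(1) by (rule reds_pi1)
  then have k3: "tyR \<Delta> (Pi A3 B1) (Univ k)" using SR k by blast
  have M3: "tyR \<Delta> M (Pi A3 B1)"
    using wfR_tyR.r_conv[OF T1(2)[unfolded P(1)] k3] reds_conv[OF \<open>reds (Pi A1 B1) (Pi A3 B1)\<close>] by blast
  obtain i3 where "tyR \<Delta> A3 (Univ i3)" using gen_pi[OF k3 refl] by blast
  then have N3: "tyR \<Delta> N A3" using wfR_tyR.r_conv[OF T2(2)] reds_conv[OF A3(2)] by blast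
  have "tyR \<Delta> (App M N) (opn B1 N)" using M3 N3 by (rule wfR_tyR.r_app)
  moreover have "reds (opn B N) (opn B1 N)" by (rule reds_opn_body[of S1]) (use P lN in auto)
  ultimately show ?case by blast
next
  case (r_lam \<Gamma> A i S M B)
  have fA: "fv A \<subseteq> cdom \<Delta>" and fM: "fv M \<subseteq> cdom \<Delta>" using r_lam.prems by auto
  obtain A' where "reds (Univ i) A'" "tyR \<Delta> A A'" using r_lam.IH(1) r_lam.prems fA by blast
  then have A: "tyR \<Delta> A (Univ i)" using reds_Univ by blast
  have cD: "cdom \<Delta> \<subseteq> cdom \<Gamma>" using r_lam.prems(2) by (auto simp: cdom_def)
  obtain x where x: "x \<notin> S \<union> fv B \<union> fv M \<union> cdom \<Gamma>" using fresh_for r_lam.hyps(2) by blast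
  have w: "wfR (\<Delta> @ [(x, A)])" using r_lam.prems(1) A x cD by (intro rwf_cons) auto
  have s: "set (\<Delta> @ [(x, A)]) \<subseteq> set (\<Gamma> @ [(x, A)])" using r_lam.prems(2) by auto
  have f: "fv (opn M (FVar x)) \<subseteq> cdom (\<Delta> @ [(x, A)])" using fv_opn_sub[of M "FVar x"] fM by auto
  obtain B0 where B0: "reds (opn B (FVar x)) B0" "tyR (\<Delta> @ [(x, A)]) (opn M (FVar x)) B0"
    using r_lam.IH(2)[of x "\<Delta> @ [(x, A)]"] x w s f by blast
  have lB0: "lc B0" using tyR_lc[OF B0(2)] by simp
  define B' where "B' = cls x B0"
  have eB: "opn B' (FVar x) = B0" using lB0 by (simp add: B'_def opn_cls)
  have xB: "x \<notin> fv B'" by (simp add: B'_def fv_cls)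
  have "tyR \<Delta> (Lam A M) (Pi A B')"
  proof (rule wfR_tyR.r_lam[OF A, of "cdom \<Delta>"])
    show "finite (cdom \<Delta>)" by (rule finite_cdom)
    fix y assume y: "y \<notin> cdom \<Delta>"
    show "tyR (\<Delta> @ [(y, A)]) (opn M (FVar y)) (opn B' (FVar y))"
      by (rule rename_opn[of \<Delta> x A M B' y]) (use B0 eB xB x y in auto)
  qed
  moreover have "reds (Pi A B) (Pi A B')"
  proof -
    have l: "lc (opn B (FVar x))" using tyR_lc r_lam.hyps(3) x by blast
    have "reds (Pi A B) (Pi A (cls x B0))" using reds_pi2_gen[OF B0(1) l refl] x by blast
    then show ?thesis by (simp add: B'_def)
  qed
  ultimately show ?case by blast
next
  case (r_conv \<Gamma> M A B i)
  obtain A1 where A1: "reds A A1" "tyR \<Delta> M A1" using r_conv.IH(1) r_conv.prems by blast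
  obtain C where C: "reds A C" "reds B C" using r_conv.hyps(3) by (auto simp: conv_def)
  have lA: "lc A" using tyR_lc[OF r_conv.hyps(1)] by simp
  obtain D where D: "reds A1 D" "reds C D" using CR[OF A1(1) C(1) lA] by blast
  obtain k where "tyR \<Delta> A1 (Univ k)" using TC A1(2) by blast
  then have "tyR \<Delta> D (Univ k)" using SR D(1) by blast
  then have "tyR \<Delta> M D" using wfR_tyR.r_conv[OF A1(2)] reds_conv[OF D(1)] by blast
  moreover have "reds B D" using C(2) D(2) by (rule rtranclp_trans)
  ultimately show ?case by blast
qed auto

definition ordered :: "ctx \<Rightarrow> bool" where
  "ordered \<Delta> = (\<forall>k < length \<Delta>. fv (snd (\<Delta> ! k)) \<subseteq> cdom (take k \<Delta>))"

lemma ordered_Nil[simp]: "ordered []" by (simp add: ordered_def)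

lemma ordered_snoc: "ordered (\<Delta> @ [e]) \<longleftrightarrow> ordered \<Delta> \<and> fv (snd e) \<subseteq> cdom \<Delta>"
proof
  assume h: "ordered (\<Delta> @ [e])"
  have "ordered \<Delta>" unfolding ordered_def
  proof (intro allI impI)
    fix k assume k: "k < length \<Delta>"
    then show "fv (snd (\<Delta> ! k)) \<subseteq> cdom (take k \<Delta>)" using h[unfolded ordered_def, rule_format, of k] k
      by (simp add: nth_append)
  qed
  moreover have "fv (snd e) \<subseteq> cdom \<Delta>" using h[unfolded ordered_def, rule_format, of "length \<Delta>"] by simp
  ultimately show "ordered \<Delta> \<and> fv (snd e) \<subseteq> cdom \<Delta>" by blast
next
  assume h: "ordered \<Delta> \<and> fv (snd e) \<subseteq> cdom \<Delta>"
  show "ordered (\<Delta> @ [e])" unfolding ordered_def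
  proof (intro allI impI)
    fix k assume k: "k < length (\<Delta> @ [e])"
    show "fv (snd ((\<Delta> @ [e]) ! k)) \<subseteq> cdom (take k (\<Delta> @ [e]))"
    proof (cases "k < length \<Delta>")
      case True then show ?thesis using h[unfolded ordered_def] by (simp add: nth_append)
    next
      case False then have "k = length \<Delta>" using k by simp
      then show ?thesis using h by simp
    qed
  qed
qed

lemma wfR_ordered: "wfR \<Gamma> \<Longrightarrow> ordered \<Gamma>"
proof (induction \<Gamma> rule: rev_induct)
  case (snoc p \<Gamma>)
  obtain y B where p: "p = (y, B)" by (cases p)
  then obtain i where "wfR \<Gamma>" "tyR \<Gamma> B (Univ i)" using snoc.prems wfR_snoc_inv by blast
  then show ?case using snoc.IH p tyR_fv ordered_snoc by auto
qed simp

lemma wf_from_ordered: "wfR \<Gamma> \<Longrightarrow> set \<Delta> \<subseteq> set \<Gamma> \<Longrightarrow> distinct (map fst \<Delta>) \<Longrightarrow> ordered \<Delta> \<Longrightarrow> wfR \<Delta>"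
proof (induction \<Delta> rule: rev_induct)
  case Nil then show ?case by (simp add: rwf_nil)
next
  case (snoc p \<Delta>)
  obtain y T where p: "p = (y, T)" by (cases p)
  have w: "wfR \<Delta>" using snoc ordered_snoc by auto
  have "(y, T) \<in> set \<Gamma>" using snoc.prems p by auto
  then obtain i where "tyR \<Gamma> T (Univ i)" using var_type snoc.prems(1) by blast
  moreover have "fv T \<subseteq> cdom \<Delta>" using snoc.prems(4) p ordered_snoc by auto
  ultimately obtain U where "reds (Univ i) U" "tyR \<Delta> T U" using strength[OF _ w] snoc.prems(2) by fastforce
  then have "tyR \<Delta> T (Univ i)" using reds_Univ by blast
  moreover have "y \<notin> cdom \<Delta>" using snoc.prems(3) p by (auto simp: cdom_def)
  ultimately show ?case using w p by (auto intro: rwf_cons)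
qed

lemma set_cunion[simp]: "set (cunion A B) = set A \<union> set B" by (auto simp: cunion_def)
lemma cdom_set: "cdom A = fst ` set A" by (simp add: cdom_def)
lemma cdom_cunion[simp]: "cdom (cunion A B) = cdom A \<union> cdom B" by (auto simp: cdom_def)

lemma distinct_cunion: "distinct A \<Longrightarrow> distinct B \<Longrightarrow> distinct (cunion A B)"
  by (auto simp: cunion_def)

lemma cunion_Nil[simp]: "cunion A [] = A" by (simp add: cunion_def)
lemma cunion_snoc: "cunion A (B @ [e]) = (if e \<in> set A then cunion A B else cunion A B @ [e])"
  by (simp add: cunion_def)

lemma ordered_cunion: "ordered A \<Longrightarrow> (\<forall>k < length B. fv (snd (B ! k)) \<subseteq> cdom A \<union> cdom (take k B))
  \<Longrightarrow> ordered (cunion A B)"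
proof (induction B rule: rev_induct)
  case Nil then show ?case by simp
next
  case (snoc e B)
  have "\<forall>k < length B. fv (snd (B ! k)) \<subseteq> cdom A \<union> cdom (take k B)"
  proof (intro allI impI)
    fix k assume k: "k < length B"
    then show "fv (snd (B ! k)) \<subseteq> cdom A \<union> cdom (take k B)"
      using snoc.prems(2)[rule_format, of k] by (simp add: nth_append)
  qed
  then have o: "ordered (cunion A B)" using snoc by blast
  have "fv (snd e) \<subseteq> cdom A \<union> cdom B" using snoc.prems(2)[rule_format, of "length B"] by simp
  then show ?case using o by (simp add: cunion_snoc ordered_snoc)
qed

lemma foldl_cunion_set: "set (foldl cunion acc Ls) = set acc \<union> (\<Union>L \<in> set Ls. set L)"
  by (induction Ls arbitrary: acc) auto

lemma foldl_cunion_distinct: "distinct acc \<Longrightarrow> (\<forall>L \<in> set Ls. distinct L) \<Longrightarrow> distinct (foldl cunion acc Ls)"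
  by (induction Ls arbitrary: acc) (auto intro: distinct_cunion)

lemma ordered_take: "ordered \<Gamma> \<Longrightarrow> ordered (take i \<Gamma>)"
  unfolding ordered_def by (auto simp: min_def)

lemma foldl_cunion_ordered: "ordered acc \<Longrightarrow> (\<forall>L \<in> set Ls. ordered L) \<Longrightarrow> ordered (foldl cunion acc Ls)"
proof (induction Ls arbitrary: acc)
  case (Cons L Ls)
  have "ordered (cunion acc L)"
  proof (rule ordered_cunion[OF Cons.prems(1)], intro allI impI)
    fix k assume "k < length L"
    then show "fv (snd (L ! k)) \<subseteq> cdom acc \<union> cdom (take k L)" using Cons.prems(2) by (auto simp: ordered_def)
  qed
  then show ?case using Cons by simp
qed simp

lemma fvc_aux_props: "\<forall>\<Gamma> S. distinct (map fst \<Gamma>) \<longrightarrow> ordered \<Gamma> \<longrightarrow> length \<Gamma> \<le> n \<longrightarrow>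
   set (fvc_aux n \<Gamma> S) \<subseteq> set \<Gamma> \<and> distinct (fvc_aux n \<Gamma> S) \<and> ordered (fvc_aux n \<Gamma> S) \<and>
   S \<inter> cdom \<Gamma> \<subseteq> cdom (fvc_aux n \<Gamma> S)"
proof (induction n)
  case 0 then show ?case by (auto simp: cdom_def)
next
  case (Suc n)
  show ?case
  proof (intro allI impI)
    fix \<Gamma> S assume d: "distinct (map fst \<Gamma>)" and o: "ordered \<Gamma>" and l: "length \<Gamma> \<le> Suc n"
    define idx where "idx = filter (\<lambda>i. fst (\<Gamma> ! i) \<in> S) [0..<length \<Gamma>]"
    define L where "L = (\<lambda>i. fvc_aux n (take i \<Gamma>) (fv (snd (\<Gamma> ! i))))"
    define F where "F = foldl cunion [] (map L idx)"
    define E where "E = map (\<lambda>i. \<Gamma> ! i) idx"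
    have eq: "fvc_aux (Suc n) \<Gamma> S = cunion F E" by (simp add: Let_def idx_def L_def F_def E_def)
    have idx_lt: "\<And>i. i \<in> set idx \<Longrightarrow> i < length \<Gamma>" by (simp add: idx_def)
    have IH: "\<And>i. i \<in> set idx \<Longrightarrow> set (L i) \<subseteq> set (take i \<Gamma>) \<and> distinct (L i) \<and> ordered (L i) \<and>
        fv (snd (\<Gamma> ! i)) \<inter> cdom (take i \<Gamma>) \<subseteq> cdom (L i)"
    proof -
      fix i assume i: "i \<in> set idx"
      have "distinct (map fst (take i \<Gamma>))" using d by (simp add: take_map[symmetric])
      moreover have "ordered (take i \<Gamma>)" using o by (rule ordered_take)
      moreover have "length (take i \<Gamma>) \<le> n" using idx_lt[OF i] l by simp
      ultimately show "?thesis i" using Suc.IH unfolding L_def by blast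
    qed
    have setF: "set F = (\<Union>i \<in> set idx. set (L i))" by (simp add: F_def foldl_cunion_set)
    have sF: "set F \<subseteq> set \<Gamma>" using IH setF set_take_subset by fastforce
    have dF: "distinct F" unfolding F_def using IH by (intro foldl_cunion_distinct) auto
    have oF: "ordered F" unfolding F_def using IH by (intro foldl_cunion_ordered) auto
    have sE: "set E \<subseteq> set \<Gamma>" using idx_lt by (auto simp: E_def)
    have dG: "distinct \<Gamma>" using d by (simp add: distinct_map)
    have dE: "distinct E" unfolding E_def
    proof (rule distinct_map[THEN iffD2], rule conjI)
      show "distinct idx" by (simp add: idx_def)
      show "inj_on ((!) \<Gamma>) (set idx)" using dG idx_lt by (auto simp: inj_on_def nth_eq_iff_index_eq)
    qed
    have oR: "ordered (cunion F E)"
    proof (rule ordered_cunion[OF oF], intro allI impI)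
      fix k assume k: "k < length E"
      define i where "i = idx ! k"
      have i: "i \<in> set idx" using k by (simp add: E_def i_def)
      have Ek: "E ! k = \<Gamma> ! i" using k by (simp add: E_def i_def)
      have "fv (snd (\<Gamma> ! i)) \<subseteq> cdom (take i \<Gamma>)" using o idx_lt[OF i] by (simp add: ordered_def)
      then have "fv (snd (\<Gamma> ! i)) \<subseteq> cdom (L i)" using IH[OF i] by blast
      moreover have "cdom (L i) \<subseteq> cdom F" using setF i by (auto simp: cdom_def)
      ultimately show "fv (snd (E ! k)) \<subseteq> cdom F \<union> cdom (take k E)" unfolding Ek by blast
    qed
    have cR: "S \<inter> cdom \<Gamma> \<subseteq> cdom (cunion F E)"
    proof
      fix x assume x: "x \<in> S \<inter> cdom \<Gamma>"
      then obtain p where p: "p \<in> set \<Gamma>" "fst p = x" by (auto simp: cdom_def)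
      then obtain i where i: "i < length \<Gamma>" "\<Gamma> ! i = p" by (auto simp: in_set_conv_nth)
      then have "i \<in> set idx" using x p by (simp add: idx_def)
      then have "p \<in> set E" using i by (auto simp: E_def)
      then show "x \<in> cdom (cunion F E)" using p by (auto simp: cdom_def)
    qed
    show "set (fvc_aux (Suc n) \<Gamma> S) \<subseteq> set \<Gamma> \<and> distinct (fvc_aux (Suc n) \<Gamma> S) \<and>
        ordered (fvc_aux (Suc n) \<Gamma> S) \<and> S \<inter> cdom \<Gamma> \<subseteq> cdom (fvc_aux (Suc n) \<Gamma> S)"
      unfolding eq using sF sE dF dE oR cR by (auto intro: distinct_cunion)
  qed
qed

lemma distinct_names_sub: "distinct (map fst \<Gamma>) \<Longrightarrow> set \<Delta> \<subseteq> set \<Gamma> \<Longrightarrow> distinct \<Delta> \<Longrightarrow> distinct (map fst \<Delta>)"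
proof -
  assume d: "distinct (map fst \<Gamma>)" and s: "set \<Delta> \<subseteq> set \<Gamma>" and dD: "distinct \<Delta>"
  have "inj_on fst (set \<Delta>)"
  proof (rule inj_onI)
    fix p q assume "p \<in> set \<Delta>" "q \<in> set \<Delta>" "fst p = fst q"
    then show "p = q" using s d eq_key_imp_eq_value by (metis prod.collapse subsetD)
  qed
  then show ?thesis using dD by (simp add: distinct_map)
qed

theorem lemma3p5:
  assumes "typing \<Gamma> M A"
  shows "typing (FV \<Gamma> M A) M A"
proof -
  have t: "tyR \<Gamma> M A" using typing_tyR assms by blast
  have w: "wfR \<Gamma>" using tyR_wf[OF t] .
  define \<Delta> where "\<Delta> = FV \<Gamma> M A"
  have fvs: "fv M \<union> fv A \<subseteq> cdom \<Gamma>" using tyR_fv[OF t] by blast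
  have P: "set \<Delta> \<subseteq> set \<Gamma> \<and> distinct \<Delta> \<and> ordered \<Delta> \<and> (fv M \<union> fv A) \<inter> cdom \<Gamma> \<subseteq> cdom \<Delta>"
    using fvc_aux_props[of "length \<Gamma>"] wfR_distinct[OF w] wfR_ordered[OF w]
    unfolding \<Delta>_def FV_def fvc_def by blast
  have dn: "distinct (map fst \<Delta>)" using distinct_names_sub[OF wfR_distinct[OF w]] P by blast
  have wD: "wfR \<Delta>" using wf_from_ordered[OF w] P dn by blast
  have cD: "fv M \<union> fv A \<subseteq> cdom \<Delta>" using P fvs by blast
  obtain A' where A': "reds A A'" "tyR \<Delta> M A'" using strength[OF t wD] P cD by blast
  obtain i where "tyR \<Gamma> A (Univ i)" using TC[OF t] by blast
  then obtain U where "reds (Univ i) U" "tyR \<Delta> A U" using strength[OF _ wD] P cD by blast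
  then have Ai: "tyR \<Delta> A (Univ i)" using reds_Univ by blast
  have "tyR \<Delta> M A" using wfR_tyR.r_conv[OF A'(2) Ai] reds_conv'[OF A'(1)] by blast
  then have "typing \<Delta> M A" using tyR_typing by blast
  then show ?thesis by (simp add: \<Delta>_def)
qed

end
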